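(* For every $n\ge 2$ and all nonnegative integers $l_1,\dots,l_n,l_\infty$, the rule described in the context (each generator $s_{p,q}$ acting by reflecting the region cut off by a shear chord and reconnecting arcs, and words acting right to left) defines a group action of the cactus group $J_n$ on $X(l_1,\dots,l_n,l_\infty)$. In particular the operations satisfy $s_{p,q}^2=\mathrm{id}$, $s_{p,q}s_{p',q'}=s_{p',q'}s_{p,q}$ when $[p,q]\cap[p',q']=\emptyset$, and $s_{p,q}s_{p',q'}s_{p,q}=s_{p+q-q',\,p+q-p'}$ when $p\le p'<q'\le q$.
   Context: Cactus group: $J_n$ is the group generated by $s_{p,q}$, $1\le p<q\le n$, subject to the relations $s_{p,q}^2=e$; $s_{p,q}s_{p',q'}=s_{p',q'}s_{p,q}$ if $[p,q]$ and $[p',q']$ are disjoint; $s_{p,q}s_{p',q'}s_{p,q}=s_{p+q-q',p+q-p'}$ if $p\le p'<q'\le q$. Arc diagrams: fix nonnegative integers $l_1,\dots,l_n,l_\infty$. On the boundary circle of a closed disc place $n+1$ marked positions: position $0$ (occupied by the distinguished point $z_\infty$) and positions $1,\dots,n$ following it in clockwise order. An arc diagram consists of a bijective assignment of the labels $z_1,\dots,z_n$ to the positions $1,\dots,n$, together with a finite collection of simple arcs in the disc, pairwise disjoint except possibly at endpoints, each joining two distinct marked points, such that the point labelled $z_j$ is an endpoint of exactly $l_j$ arcs for each $j\in\{1,\dots,n,\infty\}$ ($l_j$ is the valence of $z_j$). Parallel arcs between the same two points are allowed. Diagrams are considered up to isotopy fixing the marked points; equivalently a diagram is determined by the labelling and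 the number of arcs joining each pair of marked points. $X(l_1,\dots,l_n,l_\infty)$ is the set of all such diagrams. Action: for $1\le p<q\le n$ and a diagram $x$, choose a chord $\ell$ (the shear line) separating positions $p,\dots,q$ from all other marked points, and isotope the arcs so that each crosses $\ell$ at most once, transversally. Let $R$ be the part of the disc cut off by $\ell$ containing positions $p,\dots,q$. Apply to $R$ the reflection mapping $\ell$ to itself with orientation reversed (so the label at position $p+t$ moves to position $q-t$, and the order of the crossing points on $\ell$ is reversed), leave the complement of $R$ unchanged, and glue the arc pieces back together at the crossing points of $\ell$. The resulting diagram is $s_{p,q}x$. A word $s_{p_k,q_k}\cdots s_{p_1,q_1}$ acts by applying $s_{p_1,q_1}$ first, then $s_{p_2,q_2}$, and so on. *)

theory Defs
  imports Main
begin

text \<open>A diagram is a pair (sigma, m): sigma k is the index j of the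
label z_j sitting at position k (for 1 \<le> k \<le> n); by convention sigma k = k for
positions outside 1..n (so position 0 carries z_infinity).  m i j is the number of
arcs joining the marked points at positions i and j (0 \<le> i,j \<le> n).\<close>

type_synonym diagram = "(nat \<Rightarrow> nat) \<times> (nat \<Rightarrow> nat \<Rightarrow> nat)"

definition arc_diagrams :: "nat \<Rightarrow> (nat \<Rightarrow> nat) \<Rightarrow> nat \<Rightarrow> diagram set" where
  "arc_diagrams n l linf = {(\<sigma>, m).
     bij_betw \<sigma> {1..n} {1..n} \<and> (\<forall>k. k \<notin> {1..n} \<longrightarrow> \<sigma> k = k) \<and>
     (\<forall>i j. m i j = m j i) \<and> (\<forall>i. m i i = 0) \<and>
     (\<forall>i j. n < i \<or> n < j \<longrightarrow> m i j = 0) \<and>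
     (\<forall>a b c d. a < c \<and> c < b \<and> b < d \<longrightarrow> m a b = 0 \<or> m c d = 0) \<and>
     (\<forall>i\<in>{1..n}. (\<Sum>k\<le>n. m i k) = l (\<sigma> i)) \<and>
     (\<Sum>k\<le>n. m 0 k) = linf}"

definition refl_pos :: "nat \<Rightarrow> nat \<Rightarrow> nat \<Rightarrow> nat" where
  "refl_pos p q k = (if p \<le> k \<and> k \<le> q then p + q - k else k)"

text \<open>Outer positions in the order in which their arcs meet the shear line, starting
from the end of the shear line lying between positions p-1 and p.\<close>
definition outer_order :: "nat \<Rightarrow> nat \<Rightarrow> nat \<Rightarrow> nat list" where
  "outer_order n p q = rev [0..<p] @ rev [q+1..<n+1]"

text \<open>Arcs crossing the shear line, listed as (inner endpoint, outer endpoint) in the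
order of their crossing points along the shear line.\<close>
definition crossing_list :: "nat \<Rightarrow> nat \<Rightarrow> nat \<Rightarrow> (nat \<Rightarrow> nat \<Rightarrow> nat) \<Rightarrow> (nat \<times> nat) list" where
  "crossing_list n p q m =
     concat (map (\<lambda>i. concat (map (\<lambda>r. replicate (m i r) (i, r)) (outer_order n p q))) [p..<q+1])"

text \<open>After reflecting R, the k-th crossing point (from the same end) carries the outer
piece of the k-th crossing arc and the reflected inner piece of the (reverse) k-th arc.
Result: list of (outer endpoint, new inner endpoint).\<close>
definition new_crossing :: "nat \<Rightarrow> nat \<Rightarrow> nat \<Rightarrow> (nat \<Rightarrow> nat \<Rightarrow> nat) \<Rightarrow> (nat \<times> nat) list" where
  "new_crossing n p q m =
     (let L = crossing_list n p q m in
      zip (map snd L) (map (\<lambda>(i, r). p + q - i) (rev L)))"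

definition shear :: "nat \<Rightarrow> nat \<times> nat \<Rightarrow> diagram \<Rightarrow> diagram" where
  "shear n g x = (case g of (p, q) \<Rightarrow> case x of (\<sigma>, m) \<Rightarrow>
     (let ins = (\<lambda>k. p \<le> k \<and> k \<le> q);
          N = new_crossing n p q m;
          cnt = (\<lambda>r i. length (filter (\<lambda>e. e = (r, i)) N))
      in (\<lambda>k. \<sigma> (refl_pos p q k),
          \<lambda>i j. if ins i = ins j then m (refl_pos p q i) (refl_pos p q j)
                else if ins i then cnt j i else cnt i j)))"

text \<open>A word s_{p_k,q_k} ... s_{p_1,q_1} is the list [(p_k,q_k),...,(p_1,q_1)];
the rightmost letter acts first.\<close>
fun act_word :: "nat \<Rightarrow> (nat \<times> nat) list \<Rightarrow> diagram \<Rightarrow> diagram" where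
  "act_word n [] x = x"
| "act_word n (g # w) x = shear n g (act_word n w x)"

definition cactus_gen :: "nat \<Rightarrow> nat \<times> nat \<Rightarrow> bool" where
  "cactus_gen n g = (1 \<le> fst g \<and> fst g < snd g \<and> snd g \<le> n)"

inductive cactus_rel :: "nat \<Rightarrow> (nat \<times> nat) list \<Rightarrow> (nat \<times> nat) list \<Rightarrow> bool" for n where
  invol: "cactus_gen n (p, q) \<Longrightarrow> cactus_rel n [(p, q), (p, q)] []"
| comm: "cactus_gen n (p, q) \<Longrightarrow> cactus_gen n (p', q') \<Longrightarrow> q < p' \<or> q' < p \<Longrightarrow>
     cactus_rel n [(p, q), (p', q')] [(p', q'), (p, q)]"
| nest: "cactus_gen n (p, q) \<Longrightarrow> p \<le> p' \<Longrightarrow> p' < q' \<Longrightarrow> q' \<le> q \<Longrightarrow>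
     cactus_rel n [(p, q), (p', q'), (p, q)] [(p + q - q', p + q - p')]"

text \<open>Equality in J_n: the congruence on words in the generators generated by the
defining relations (J_n = words modulo this congruence; it is a group since all
generators are involutions).\<close>
inductive cactus_eq :: "nat \<Rightarrow> (nat \<times> nat) list \<Rightarrow> (nat \<times> nat) list \<Rightarrow> bool" for n where
  refl: "list_all (cactus_gen n) w \<Longrightarrow> cactus_eq n w w"
| rel: "cactus_rel n u v \<Longrightarrow> list_all (cactus_gen n) a \<Longrightarrow> list_all (cactus_gen n) b \<Longrightarrow>
     cactus_eq n (a @ u @ b) (a @ v @ b)"
| sym: "cactus_eq n u v \<Longrightarrow> cactus_eq n v u"
| trans: "cactus_eq n u v \<Longrightarrow> cactus_eq n v w \<Longrightarrow> cactus_eq n u w"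

end

theory Submission
  imports Defs
begin


definition ccut :: "nat \<Rightarrow> (nat \<Rightarrow> nat \<Rightarrow> nat) \<Rightarrow> nat set \<Rightarrow> nat" where
  "ccut n m S = (\<Sum>x\<in>S. \<Sum>y\<in>{..n}-S. m x y)"

definition MM :: "(nat \<Rightarrow> nat \<Rightarrow> nat) \<Rightarrow> nat set \<Rightarrow> nat set \<Rightarrow> nat" where
  "MM m A B = (\<Sum>x\<in>A. \<Sum>y\<in>B. m x y)"

definition symm :: "(nat \<Rightarrow> nat \<Rightarrow> nat) \<Rightarrow> bool" where
  "symm m \<longleftrightarrow> (\<forall>i j. m i j = m j i)"

definition wfd :: "nat \<Rightarrow> (nat \<Rightarrow> nat \<Rightarrow> nat) \<Rightarrow> bool" where
  "wfd n m \<longleftrightarrow> symm m \<and> (\<forall>i. m i i = 0) \<and> (\<forall>i j. n < i \<or> n < j \<longrightarrow> m i j = 0)"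

definition nc :: "(nat \<Rightarrow> nat \<Rightarrow> nat) \<Rightarrow> bool" where
  "nc m \<longleftrightarrow> (\<forall>a b c d. a < c \<and> c < b \<and> b < d \<longrightarrow> m a b = 0 \<or> m c d = 0)"

lemma MM_swap: "symm m \<Longrightarrow> MM m B A = MM m A B"
  unfolding MM_def symm_def by (subst sum.swap) simp

lemma MM_union1: "finite A \<Longrightarrow> finite B \<Longrightarrow> A \<inter> B = {} \<Longrightarrow> MM m (A \<union> B) C = MM m A C + MM m B C"
  unfolding MM_def by (simp add: sum.union_disjoint)

lemma MM_union2: "finite B \<Longrightarrow> finite C \<Longrightarrow> B \<inter> C = {} \<Longrightarrow> MM m A (B \<union> C) = MM m A B + MM m A C"
  unfolding MM_def by (simp add: sum.union_disjoint sum.distrib)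

lemma cut_MM: "ccut n m S = MM m S ({..n} - S)"
  unfolding ccut_def MM_def by simp

lemma cut_union:
  assumes s: "symm m" and d: "A \<inter> B = {}" and sub: "A \<union> B \<subseteq> {..n}"
  shows "ccut n m (A \<union> B) + 2 * MM m A B = ccut n m A + ccut n m B"
proof -
  have fA: "finite A" and fB: "finite B" using sub finite_subset by auto
  let ?R = "{..n} - (A \<union> B)"
  have e1: "{..n} - A = ?R \<union> B" using sub d by auto
  have e2: "{..n} - B = ?R \<union> A" using sub d by auto
  have "ccut n m A = MM m A ?R + MM m A B"
    unfolding cut_MM e1 by (rule MM_union2) (use fB d in auto)
  moreover have "ccut n m B = MM m B ?R + MM m B A"
    unfolding cut_MM e2 by (rule MM_union2) (use fA d in auto)
  moreover have "ccut n m (A \<union> B) = MM m A ?R + MM m B ?R"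
    unfolding cut_MM by (rule MM_union1) (use fA fB d in auto)
  moreover have "MM m B A = MM m A B" using s by (rule MM_swap)
  ultimately show ?thesis by simp
qed

lemma cut_compl:
  assumes s: "symm m" and sub: "S \<subseteq> {..n}"
  shows "ccut n m S = ccut n m ({..n} - S)"
proof -
  have "{..n} - ({..n} - S) = S" using sub by auto
  then show ?thesis unfolding cut_MM using MM_swap[OF s] by simp
qed

lemma cut_empty[simp]: "ccut n m {} = 0" unfolding ccut_def by simp




lemma sum_nz_ex: "(\<Sum>x\<in>A. f x) \<noteq> (0::nat) \<Longrightarrow> \<exists>x\<in>A. f x \<noteq> 0"
  by (erule sum.not_neutral_contains_not_neutral) blast

lemma symmD: "symm m \<Longrightarrow> m a b = m b a"
  unfolding symm_def by blast

lemma ncE: "nc m \<Longrightarrow> a < c \<Longrightarrow> c < b \<Longrightarrow> b < d \<Longrightarrow> m a b \<noteq> 0 \<Longrightarrow> m c d \<noteq> 0 \<Longrightarrow> False"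
  unfolding nc_def by metis

lemma MM_zero_or:
  assumes nc: "nc m" and s: "symm m"
    and H: "\<And>x y u w. x\<in>X \<Longrightarrow> y\<in>Y \<Longrightarrow> u\<in>Z \<Longrightarrow> w\<in>W \<Longrightarrow>
       (w < x \<and> x < u \<and> u < y) \<or> (x < u \<and> u < y \<and> y < w)"
  shows "MM m X Y = 0 \<or> MM m Z W = 0"
proof (rule ccontr)
  assume "\<not> ?thesis"
  then have h1: "(\<Sum>x\<in>X. \<Sum>y\<in>Y. m x y) \<noteq> 0" and h2: "(\<Sum>x\<in>Z. \<Sum>y\<in>W. m x y) \<noteq> 0"
    unfolding MM_def by auto
  obtain x where x: "x\<in>X" "(\<Sum>y\<in>Y. m x y) \<noteq> 0" using sum_nz_ex[OF h1] by blast
  obtain y where y: "y\<in>Y" "m x y \<noteq> 0" using sum_nz_ex[OF x(2)] by blast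
  obtain u where u: "u\<in>Z" "(\<Sum>y\<in>W. m u y) \<noteq> 0" using sum_nz_ex[OF h2] by blast
  obtain w where w: "w\<in>W" "m u w \<noteq> 0" using sum_nz_ex[OF u(2)] by blast
  have xy: "x\<in>X" "y\<in>Y" "m x y \<noteq> 0" using x y by auto
  have uw: "u\<in>Z" "w\<in>W" "m u w \<noteq> 0" using u w by auto
  from H[OF xy(1,2) uw(1,2)] show False
  proof
    assume h: "w < x \<and> x < u \<and> u < y"
    have mwu: "m w u \<noteq> 0" using uw(3) symmD[OF s, of w u] by simp
    have "w < x" "x < u" "u < y" using h by auto
    from ncE[OF nc this mwu xy(3)] show False .
  next
    assume h: "x < u \<and> u < y \<and> y < w"
    have "x < u" "u < y" "y < w" using h by auto
    from ncE[OF nc this xy(3) uw(3)] show False .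
  qed
qed

lemma partial_left:
  assumes w: "wfd n m" and nc: "nc m" and a: "a < p" "p \<le> b" "b < q" "q \<le> n"
  shows "ccut n m {a..b} + 2 * min (MM m {a..p-1} {p..q}) (MM m {p..b} ({..n} - {p..q}))
           = ccut n m {a..p-1} + ccut n m {p..b}"
    and "ccut n m {a..q} + 2 * MM m {a..p-1} {p..q} = ccut n m {a..p-1} + ccut n m {p..q}"
    and "ccut n m {p..b} + ccut n m {p..q} = ccut n m {b+1..q} + 2 * MM m {p..b} ({..n} - {p..q})"
proof -
  have s: "symm m" using w unfolding wfd_def by simp
  let ?A = "{a..p-1}" and ?B = "{p..b}" and ?K = "{p..q}" and ?D = "{b+1..q}" and ?R = "{..n} - {a..q}"
  have k1: "MM m ?A ?K = MM m ?A ?B + MM m ?A ?D"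
  proof -
    have e: "?K = ?B \<union> ?D" using a by auto
    have "MM m ?A (?B \<union> ?D) = MM m ?A ?B + MM m ?A ?D" by (rule MM_union2) (use a in auto)
    then show ?thesis using e by simp
  qed
  have k2: "MM m ?B ({..n} - ?K) = MM m ?B ?A + MM m ?B ?R"
  proof -
    have e: "{..n} - ?K = ?A \<union> ?R" using a by auto
    have "MM m ?B (?A \<union> ?R) = MM m ?B ?A + MM m ?B ?R" by (rule MM_union2) (use a in auto)
    then show ?thesis using e by simp
  qed
  have zo: "MM m ?A ?D = 0 \<or> MM m ?B ?R = 0"
    by (rule MM_zero_or[OF nc s]) (use a in auto)
  have mab: "MM m ?B ?A = MM m ?A ?B" by (rule MM_swap[OF s])
  have mn: "min (MM m ?A ?K) (MM m ?B ({..n} - ?K)) = MM m ?A ?B"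
    using k1 k2 zo mab by auto
  have "ccut n m (?A \<union> ?B) + 2 * MM m ?A ?B = ccut n m ?A + ccut n m ?B"
    by (rule cut_union[OF s]) (use a in auto)
  moreover have "?A \<union> ?B = {a..b}" using a by auto
  ultimately show "ccut n m {a..b} + 2 * min (MM m ?A ?K) (MM m ?B ({..n} - ?K))
           = ccut n m ?A + ccut n m ?B" using mn by simp
  have "ccut n m (?A \<union> ?K) + 2 * MM m ?A ?K = ccut n m ?A + ccut n m ?K"
    by (rule cut_union[OF s]) (use a in auto)
  moreover have "?A \<union> ?K = {a..q}" using a by auto
  ultimately show "ccut n m {a..q} + 2 * MM m ?A ?K = ccut n m ?A + ccut n m ?K" by simp
  have u: "ccut n m (?B \<union> ?D) + 2 * MM m ?B ?D = ccut n m ?B + ccut n m ?D"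
    by (rule cut_union[OF s]) (use a in auto)
  have bk: "?B \<union> ?D = ?K" using a by auto
  have cb: "ccut n m ?B = MM m ?B ?D + MM m ?B ({..n} - ?K)"
  proof -
    have e: "{..n} - ?B = ?D \<union> ({..n} - ?K)" using a by auto
    have "MM m ?B (?D \<union> ({..n} - ?K)) = MM m ?B ?D + MM m ?B ({..n} - ?K)" by (rule MM_union2) (use a in auto)
    then show ?thesis unfolding cut_MM e by simp
  qed
  have u': "ccut n m ?K + 2 * MM m ?B ?D = ccut n m ?B + ccut n m ?D" using u by (simp only: bk)
  show "ccut n m ?B + ccut n m ?K = ccut n m ?D + 2 * MM m ?B ({..n} - ?K)"
    using u' cb by linarith
qed

lemma partial_right:
  assumes w: "wfd n m" and nc: "nc m" and a: "p < a" "a \<le> q" "q < b" "b \<le> n"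
  shows "ccut n m {a..b} + 2 * min (MM m {q+1..b} {p..q}) (MM m {a..q} ({..n} - {p..q}))
           = ccut n m {a..q} + ccut n m {q+1..b}"
    and "ccut n m {p..b} + 2 * MM m {q+1..b} {p..q} = ccut n m {q+1..b} + ccut n m {p..q}"
    and "ccut n m {a..q} + ccut n m {p..q} = ccut n m {p..a-1} + 2 * MM m {a..q} ({..n} - {p..q})"
proof -
  have s: "symm m" using w unfolding wfd_def by simp
  let ?C = "{q+1..b}" and ?B = "{a..q}" and ?K = "{p..q}" and ?E = "{p..a-1}" and ?R = "{..n} - {p..b}"
  have k1: "MM m ?C ?K = MM m ?C ?B + MM m ?C ?E"
  proof -
    have e: "?K = ?B \<union> ?E" using a by auto
    have "MM m ?C (?B \<union> ?E) = MM m ?C ?B + MM m ?C ?E" by (rule MM_union2) (use a in auto)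
    then show ?thesis using e by simp
  qed
  have k2: "MM m ?B ({..n} - ?K) = MM m ?B ?C + MM m ?B ?R"
  proof -
    have e: "{..n} - ?K = ?C \<union> ?R" using a by auto
    have "MM m ?B (?C \<union> ?R) = MM m ?B ?C + MM m ?B ?R" by (rule MM_union2) (use a in auto)
    then show ?thesis using e by simp
  qed
  have zo: "MM m ?E ?C = 0 \<or> MM m ?B ?R = 0"
    by (rule MM_zero_or[OF nc s]) (use a in auto)
  have mab: "MM m ?C ?B = MM m ?B ?C" by (rule MM_swap[OF s])
  have mce: "MM m ?C ?E = MM m ?E ?C" by (rule MM_swap[OF s])
  have mn: "min (MM m ?C ?K) (MM m ?B ({..n} - ?K)) = MM m ?B ?C"
    using k1 k2 zo mab mce by auto
  have "ccut n m (?B \<union> ?C) + 2 * MM m ?B ?C = ccut n m ?B + ccut n m ?C"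
    by (rule cut_union[OF s]) (use a in auto)
  moreover have "?B \<union> ?C = {a..b}" using a by auto
  ultimately show "ccut n m {a..b} + 2 * min (MM m ?C ?K) (MM m ?B ({..n} - ?K))
           = ccut n m ?B + ccut n m ?C" using mn by simp
  have "ccut n m (?C \<union> ?K) + 2 * MM m ?C ?K = ccut n m ?C + ccut n m ?K"
    by (rule cut_union[OF s]) (use a in auto)
  moreover have "?C \<union> ?K = {p..b}" using a by auto
  ultimately show "ccut n m {p..b} + 2 * MM m ?C ?K = ccut n m ?C + ccut n m ?K" by simp
  have u: "ccut n m (?B \<union> ?E) + 2 * MM m ?B ?E = ccut n m ?B + ccut n m ?E"
    by (rule cut_union[OF s]) (use a in auto)
  have bk: "?B \<union> ?E = ?K" using a by auto
  have cb: "ccut n m ?B = MM m ?B ?E + MM m ?B ({..n} - ?K)"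
  proof -
    have e: "{..n} - ?B = ?E \<union> ({..n} - ?K)" using a by auto
    have "MM m ?B (?E \<union> ({..n} - ?K)) = MM m ?B ?E + MM m ?B ({..n} - ?K)" by (rule MM_union2) (use a in auto)
    then show ?thesis unfolding cut_MM e by simp
  qed
  have u': "ccut n m ?K + 2 * MM m ?B ?E = ccut n m ?B + ccut n m ?E" using u by (simp only: bk)
  show "ccut n m ?B + ccut n m ?K = ccut n m ?E + 2 * MM m ?B ({..n} - ?K)"
    using u' cb by linarith
qed

lemma arith_det: "(c1::nat) + k = A1 + B1 \<Longrightarrow> c2 + k = A2 + B2 \<Longrightarrow> A1 = A2 \<Longrightarrow> B1 = B2 \<Longrightarrow> c1 = c2"
  by simp

lemma arith_d1: "(c1::nat) + 2*x1 = A1 + K1 \<Longrightarrow> c2 + 2*x2 = A2 + K2 \<Longrightarrow> c1=c2 \<Longrightarrow> A1=A2 \<Longrightarrow> K1=K2 \<Longrightarrow> x1 = x2"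
  by simp
lemma arith_d2: "(B1::nat) + K1 = D1 + 2*x1 \<Longrightarrow> B2 + K2 = D2 + 2*x2 \<Longrightarrow> B1=B2 \<Longrightarrow> K1=K2 \<Longrightarrow> D1=D2 \<Longrightarrow> x1 = x2"
  by simp

lemma det_left:
  assumes "wfd n m1" "nc m1" "wfd n m2" "nc m2" and a: "a < p" "p \<le> b" "b < q" "q \<le> n"
    and e: "ccut n m1 {a..p-1} = ccut n m2 {a..p-1}" "ccut n m1 {p..b} = ccut n m2 {p..b}"
      "ccut n m1 {p..q} = ccut n m2 {p..q}" "ccut n m1 {a..q} = ccut n m2 {a..q}"
      "ccut n m1 {b+1..q} = ccut n m2 {b+1..q}"
  shows "ccut n m1 {a..b} = ccut n m2 {a..b}"
proof -
  note P1 = partial_left[OF assms(1,2) a] and P2 = partial_left[OF assms(3,4) a]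
  have "MM m1 {a..p-1} {p..q} = MM m2 {a..p-1} {p..q}" by (rule arith_d1[OF P1(2) P2(2) e(4) e(1) e(3)])
  moreover have "MM m1 {p..b} ({..n} - {p..q}) = MM m2 {p..b} ({..n} - {p..q})" by (rule arith_d2[OF P1(3) P2(3) e(2) e(3) e(5)])
  ultimately have mm: "min (MM m1 {a..p-1} {p..q}) (MM m1 {p..b} ({..n} - {p..q})) =
     min (MM m2 {a..p-1} {p..q}) (MM m2 {p..b} ({..n} - {p..q}))" by (simp only:)
  have x1: "ccut n m1 {a..b} + 2 * min (MM m2 {a..p-1} {p..q}) (MM m2 {p..b} ({..n} - {p..q})) = ccut n m1 {a..p-1} + ccut n m1 {p..b}"
    using P1(1) mm by (simp only:)
  show ?thesis by (rule arith_det[OF x1 P2(1) e(1) e(2)])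
qed

lemma det_right:
  assumes "wfd n m1" "nc m1" "wfd n m2" "nc m2" and a: "p < a" "a \<le> q" "q < b" "b \<le> n"
    and e: "ccut n m1 {q+1..b} = ccut n m2 {q+1..b}" "ccut n m1 {a..q} = ccut n m2 {a..q}"
      "ccut n m1 {p..q} = ccut n m2 {p..q}" "ccut n m1 {p..b} = ccut n m2 {p..b}"
      "ccut n m1 {p..a-1} = ccut n m2 {p..a-1}"
  shows "ccut n m1 {a..b} = ccut n m2 {a..b}"
proof -
  note P1 = partial_right[OF assms(1,2) a] and P2 = partial_right[OF assms(3,4) a]
  have "MM m1 {q+1..b} {p..q} = MM m2 {q+1..b} {p..q}" by (rule arith_d1[OF P1(2) P2(2) e(4) e(1) e(3)])
  moreover have "MM m1 {a..q} ({..n} - {p..q}) = MM m2 {a..q} ({..n} - {p..q})" by (rule arith_d2[OF P1(3) P2(3) e(2) e(3) e(5)])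
  ultimately have mm: "min (MM m1 {q+1..b} {p..q}) (MM m1 {a..q} ({..n} - {p..q})) =
     min (MM m2 {q+1..b} {p..q}) (MM m2 {a..q} ({..n} - {p..q}))" by (simp only:)
  have x1: "ccut n m1 {a..b} + 2 * min (MM m2 {q+1..b} {p..q}) (MM m2 {a..q} ({..n} - {p..q})) = ccut n m1 {a..q} + ccut n m1 {q+1..b}"
    using P1(1) mm by (simp only:)
  show ?thesis by (rule arith_det[OF x1 P2(1) e(2) e(1)])
qed




lemma len_filter_concat_map: "length (filter P (concat (map f xs))) = (\<Sum>x\<leftarrow>xs. length (filter P (f x)))"
  by (induction xs) auto

lemma sum_list_if_eq: "distinct xs \<Longrightarrow> (\<Sum>x\<leftarrow>xs. if x = a then (c::nat) else 0) = (if a \<in> set xs then c else 0)"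
  by (induction xs) auto

lemma G1: "finite R \<Longrightarrow> fst ` set xs \<subseteq> R \<Longrightarrow>
  (\<Sum>r\<in>R. length (filter (\<lambda>e. e = (r,i)) xs)) = length (filter (\<lambda>e. snd e = i) xs)"
proof (induction xs)
  case Nil then show ?case by simp
next
  case (Cons x xs)
  have "(\<Sum>r\<in>R. length (filter (\<lambda>e. e = (r,i)) (x # xs))) =
      (\<Sum>r\<in>R. (if r = fst x then (if snd x = i then 1 else 0) else 0)) + (\<Sum>r\<in>R. length (filter (\<lambda>e. e = (r,i)) xs))"
    by (subst sum.distrib[symmetric], rule sum.cong) (auto simp: prod_eq_iff)
  also have "(\<Sum>r\<in>R. (if r = fst x then (if snd x = i then 1 else 0) else 0)) = (if snd x = i then 1 else 0)"
    using Cons.prems by (simp add: sum.delta')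
  finally show ?case using Cons by simp
qed

lemma G2: "finite I \<Longrightarrow> snd ` set xs \<subseteq> I \<Longrightarrow>
  (\<Sum>i\<in>I. length (filter (\<lambda>e. e = (r,i)) xs)) = length (filter (\<lambda>e. fst e = r) xs)"
proof (induction xs)
  case Nil then show ?case by simp
next
  case (Cons x xs)
  have "(\<Sum>i\<in>I. length (filter (\<lambda>e. e = (r,i)) (x # xs))) =
      (\<Sum>i\<in>I. (if i = snd x then (if fst x = r then 1 else 0) else 0)) + (\<Sum>i\<in>I. length (filter (\<lambda>e. e = (r,i)) xs))"
    by (subst sum.distrib[symmetric], rule sum.cong) (auto simp: prod_eq_iff)
  also have "(\<Sum>i\<in>I. (if i = snd x then (if fst x = r then 1 else 0) else 0)) = (if fst x = r then 1 else 0)"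
    using Cons.prems by (simp add: sum.delta')
  finally show ?case using Cons by simp
qed

definition cntf :: "nat \<Rightarrow> nat \<Rightarrow> nat \<Rightarrow> (nat \<Rightarrow> nat \<Rightarrow> nat) \<Rightarrow> nat \<Rightarrow> nat \<Rightarrow> nat" where
  "cntf n p q m r i = length (filter (\<lambda>e. e = (r, i)) (new_crossing n p q m))"

definition newm :: "nat \<Rightarrow> nat \<Rightarrow> nat \<Rightarrow> (nat \<Rightarrow> nat \<Rightarrow> nat) \<Rightarrow> nat \<Rightarrow> nat \<Rightarrow> nat" where
  "newm n p q m = (\<lambda>i j. if (p \<le> i \<and> i \<le> q) = (p \<le> j \<and> j \<le> q)
     then m (refl_pos p q i) (refl_pos p q j)
     else if p \<le> i \<and> i \<le> q then cntf n p q m j i else cntf n p q m i j)"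

lemma shear_eq: "shear n (p, q) (s, m) = (\<lambda>k. s (refl_pos p q k), newm n p q m)"
  unfolding shear_def newm_def cntf_def Let_def by simp

locale blk = fixes n p q :: nat assumes p1: "1 \<le> p" and pq: "p \<le> q" and qn: "q \<le> n"
begin

abbreviation "oo \<equiv> outer_order n p q"

lemma set_oo: "set oo = {..n} - {p..q}"
  unfolding outer_order_def using p1 pq qn by auto

lemma distinct_oo: "distinct oo"
  unfolding outer_order_def using pq by auto

lemma set_L: "set (crossing_list n p q m) = {(i,r). p \<le> i \<and> i \<le> q \<and> r \<in> set oo \<and> 0 < m i r}"
  unfolding crossing_list_def by (auto split: if_splits)

lemma L2: "length (filter (\<lambda>e. fst e = i) (crossing_list n p q m)) =
   (if p \<le> i \<and> i \<le> q then \<Sum>r\<in>{..n} - {p..q}. m i r else 0)"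
proof -
  have "length (filter (\<lambda>e. fst e = i) (crossing_list n p q m)) =
     (\<Sum>i'\<leftarrow>[p..<q+1]. if i' = i then (\<Sum>r\<leftarrow>oo. m i r) else 0)"
    unfolding crossing_list_def len_filter_concat_map by (auto intro!: arg_cong[where f=sum_list])
  also have "\<dots> = (if p \<le> i \<and> i \<le> q then (\<Sum>r\<leftarrow>oo. m i r) else 0)"
    by (subst sum_list_if_eq) auto
  also have "(\<Sum>r\<leftarrow>oo. m i r) = (\<Sum>r\<in>{..n} - {p..q}. m i r)"
    using sum_list_distinct_conv_sum_set[OF distinct_oo] set_oo by simp
  finally show ?thesis .
qed

lemma L3: "length (filter (\<lambda>e. snd e = r) (crossing_list n p q m)) =
   (if r \<le> n \<and> \<not> (p \<le> r \<and> r \<le> q) then \<Sum>i\<in>{p..q}. m i r else 0)"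
proof -
  have "length (filter (\<lambda>e. snd e = r) (crossing_list n p q m)) =
     (\<Sum>i'\<leftarrow>[p..<q+1]. (\<Sum>r'\<leftarrow>oo. if r' = r then m i' r else 0))"
    unfolding crossing_list_def len_filter_concat_map
    by (intro arg_cong[where f=sum_list] map_cong refl) (auto simp: filter_replicate)
  also have "\<dots> = (\<Sum>i'\<leftarrow>[p..<q+1]. if r \<in> set oo then m i' r else 0)"
    using sum_list_if_eq[OF distinct_oo] by simp
  also have "\<dots> = (if r \<in> set oo then \<Sum>i\<in>{p..q}. m i r else 0)"
  proof -
    have "(\<Sum>i'\<leftarrow>[p..<q+1]. m i' r) = (\<Sum>i\<in>{p..<q+1}. m i r)"
      by (metis distinct_upt set_upt sum_list_distinct_conv_sum_set)
    also have "{p..<q+1} = {p..q}" by auto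
    finally show ?thesis by simp
  qed
  finally show ?thesis using set_oo by simp
qed


abbreviation "LL m \<equiv> crossing_list n p q m"
abbreviation "NN m \<equiv> new_crossing n p q m"

lemma NN_eq: "NN m = zip (map snd (LL m)) (map (\<lambda>e. p + q - fst e) (rev (LL m)))"
  unfolding new_crossing_def Let_def by (simp add: case_prod_beta')

lemma len_NN: "length (NN m) = length (LL m)"
  unfolding NN_eq by simp

lemma map_fst_NN: "map fst (NN m) = map snd (LL m)"
  unfolding NN_eq by simp

lemma map_snd_NN: "map snd (NN m) = map (\<lambda>e. p + q - fst e) (rev (LL m))"
  unfolding NN_eq by simp

lemma NN_nth: "k < length (LL m) \<Longrightarrow>
   NN m ! k = (snd (LL m ! k), p + q - fst (LL m ! (length (LL m) - Suc k)))"
  unfolding NN_eq by (simp add: rev_nth)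

lemma set_NN:
  assumes "(r, i) \<in> set (NN m)"
  shows "r \<in> set oo" "p \<le> i" "i \<le> q" "\<exists>i0. p \<le> i0 \<and> i0 \<le> q \<and> 0 < m i0 r"
    "\<exists>r0. r0 \<in> set oo \<and> 0 < m (p + q - i) r0"
proof -
  have r: "r \<in> set (map snd (LL m))" using set_zip_leftD assms unfolding NN_eq by fast
  have i: "i \<in> set (map (\<lambda>e. p + q - fst e) (rev (LL m)))" using set_zip_rightD assms unfolding NN_eq by fast
  from r obtain i0 where "(i0, r) \<in> set (LL m)" by auto
  then show "r \<in> set oo" "\<exists>i0. p \<le> i0 \<and> i0 \<le> q \<and> 0 < m i0 r" unfolding set_L by auto
  from i obtain i1 r0 where e: "(i1, r0) \<in> set (LL m)" "i = p + q - i1" by auto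
  then have "p \<le> i1" "i1 \<le> q" "r0 \<in> set oo" "0 < m i1 r0" unfolding set_L by auto
  with e(2) show "p \<le> i" "i \<le> q" "\<exists>r0. r0 \<in> set oo \<and> 0 < m (p + q - i) r0" by auto
qed

lemma fst_NN_sub: "fst ` set (NN m) \<subseteq> {..n} - {p..q}"
  using set_NN(1) set_oo by force

lemma snd_NN_sub: "snd ` set (NN m) \<subseteq> {p..q}"
  using set_NN(2,3) by force

lemma F3:
  assumes i: "p \<le> i" "i \<le> q"
  shows "(\<Sum>r\<in>{..n}-{p..q}. cntf n p q m r i) = (\<Sum>r\<in>{..n}-{p..q}. m (p + q - i) r)"
proof -
  have "(\<Sum>r\<in>{..n}-{p..q}. cntf n p q m r i) = length (filter (\<lambda>e. snd e = i) (NN m))"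
    unfolding cntf_def by (rule G1) (use fst_NN_sub in auto)
  also have "\<dots> = length (filter (\<lambda>z. z = i) (map snd (NN m)))"
    by (simp add: filter_map o_def)
  also have "\<dots> = length (filter (\<lambda>e. p + q - fst e = i) (LL m))"
    unfolding map_snd_NN by (simp add: filter_map o_def rev_filter[symmetric])
  also have "filter (\<lambda>e. p + q - fst e = i) (LL m) = filter (\<lambda>e. fst e = p + q - i) (LL m)"
    by (rule filter_cong) (use i in \<open>auto simp: set_L\<close>)
  also have "length \<dots> = (\<Sum>r\<in>{..n}-{p..q}. m (p + q - i) r)"
  proof -
    have "p \<le> p + q - i" "p + q - i \<le> q" using i by auto
    then show ?thesis unfolding L2 by simp
  qed
  finally show ?thesis .
qed

lemma F4:
  assumes r: "r \<le> n" "\<not> (p \<le> r \<and> r \<le> q)"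
  shows "(\<Sum>i\<in>{p..q}. cntf n p q m r i) = (\<Sum>i\<in>{p..q}. m i r)"
proof -
  have "(\<Sum>i\<in>{p..q}. cntf n p q m r i) = length (filter (\<lambda>e. fst e = r) (NN m))"
    unfolding cntf_def by (rule G2) (use snd_NN_sub in auto)
  also have "\<dots> = length (filter (\<lambda>z. z = r) (map fst (NN m)))"
    by (simp add: filter_map o_def)
  also have "\<dots> = length (filter (\<lambda>e. snd e = r) (LL m))"
    unfolding map_fst_NN by (simp add: filter_map o_def)
  also have "\<dots> = (\<Sum>i\<in>{p..q}. m i r)"
    unfolding L3 using r by simp
  finally show ?thesis .
qed

lemma cntf_nz: "cntf n p q m r i \<noteq> 0 \<Longrightarrow> (r, i) \<in> set (NN m)"
  unfolding cntf_def by (metis (mono_tags) empty_filter_conv length_0_conv)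

lemma rho_in: "p \<le> k \<Longrightarrow> k \<le> q \<Longrightarrow> refl_pos p q k = p + q - k"
  unfolding refl_pos_def by simp

lemma rho_out: "\<not> (p \<le> k \<and> k \<le> q) \<Longrightarrow> refl_pos p q k = k"
  unfolding refl_pos_def by auto

lemma rho_rho[simp]: "refl_pos p q (refl_pos p q k) = k"
  unfolding refl_pos_def by auto

lemma rho_inj: "inj (refl_pos p q)"
  by (metis injI rho_rho)

lemma rho_in_blk: "p \<le> k \<Longrightarrow> k \<le> q \<Longrightarrow> p \<le> refl_pos p q k \<and> refl_pos p q k \<le> q"
  unfolding refl_pos_def by auto

lemma rho_blk_iff: "(p \<le> refl_pos p q k \<and> refl_pos p q k \<le> q) = (p \<le> k \<and> k \<le> q)"
  unfolding refl_pos_def by auto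

lemma rho_image_diff: "S \<subseteq> {p..q} \<Longrightarrow> refl_pos p q ` ({p..q} - S) = {p..q} - refl_pos p q ` S"
proof -
  have "refl_pos p q ` {p..q} = {p..q}"
  proof (intro equalityI subsetI)
    fix x assume "x \<in> refl_pos p q ` {p..q}"
    then show "x \<in> {p..q}" using rho_in_blk by auto
  next
    fix x assume x: "x \<in> {p..q}"
    then have "refl_pos p q x \<in> {p..q}" using rho_in_blk by auto
    moreover have "x = refl_pos p q (refl_pos p q x)" by simp
    ultimately show "x \<in> refl_pos p q ` {p..q}" by (rule rev_image_eqI)
  qed
  then show "S \<subseteq> {p..q} \<Longrightarrow> ?thesis" using image_set_diff[OF rho_inj] by metis
qed

lemma rho_interval: "p \<le> a \<Longrightarrow> b \<le> q \<Longrightarrow> refl_pos p q ` {a..b} = {p + q - b..p + q - a}"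
proof (intro equalityI subsetI)
  fix x assume "p \<le> a" "b \<le> q" "x \<in> refl_pos p q ` {a..b}"
  then show "x \<in> {p + q - b..p + q - a}" unfolding refl_pos_def by auto
next
  fix x assume h: "p \<le> a" "b \<le> q" "x \<in> {p + q - b..p + q - a}"
  show "x \<in> refl_pos p q ` {a..b}"
  proof (cases "a \<le> b")
    case True
    with h have "p + q - x \<in> {a..b}" "refl_pos p q (p + q - x) = x" unfolding refl_pos_def by auto
    then show ?thesis by (metis imageI)
  next
    case False
    have "p + q - a < p + q - b" using False h(1,2) p1 by linarith
    with h(3) show ?thesis by auto
  qed
qed

lemma symm_newm: "symm m \<Longrightarrow> symm (newm n p q m)"
  unfolding symm_def newm_def by auto

lemma Sh_in:
  assumes S: "S \<subseteq> {p..q}"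
  shows "ccut n (newm n p q m) S = ccut n m (refl_pos p q ` S)"
proof -
  let ?r = "refl_pos p q" and ?U = "{..n}" and ?K = "{p..q}"
  have fin: "finite S" using S finite_subset by auto
  have rS: "?r ` S \<subseteq> ?K" using S rho_in_blk by auto
  have inner: "(\<Sum>y\<in>?U - S. newm n p q m x y) = (\<Sum>y\<in>?U - ?r ` S. m (?r x) y)" if x: "x \<in> S" for x
  proof -
    have xi: "p \<le> x" "x \<le> q" using x S by auto
    have e1: "?U - S = (?K - S) \<union> (?U - ?K)" using S qn by auto
    have e2: "?U - ?r ` S = (?K - ?r ` S) \<union> (?U - ?K)" using rS qn by auto
    have a: "(\<Sum>y\<in>?K - S. newm n p q m x y) = (\<Sum>y\<in>?K - ?r ` S. m (?r x) y)"
    proof -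
      have "(\<Sum>y\<in>?K - S. newm n p q m x y) = (\<Sum>y\<in>?K - S. m (?r x) (?r y))"
        by (rule sum.cong) (use xi in \<open>auto simp: newm_def\<close>)
      also have "\<dots> = (\<Sum>y\<in>?r ` (?K - S). m (?r x) y)"
        by (rule sum.reindex[symmetric, unfolded o_def]) (meson inj_on_subset rho_inj subset_UNIV)
      also have "?r ` (?K - S) = ?K - ?r ` S" by (rule rho_image_diff[OF S])
      finally show ?thesis .
    qed
    have b: "(\<Sum>y\<in>?U - ?K. newm n p q m x y) = (\<Sum>y\<in>?U - ?K. m (?r x) y)"
    proof -
      have "(\<Sum>y\<in>?U - ?K. newm n p q m x y) = (\<Sum>y\<in>?U - ?K. cntf n p q m y x)"
        by (rule sum.cong) (use xi in \<open>auto simp: newm_def\<close>)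
      also have "\<dots> = (\<Sum>y\<in>?U - ?K. m (p + q - x) y)" by (rule F3[OF xi])
      finally show ?thesis using rho_in[OF xi] by simp
    qed
    have "(\<Sum>y\<in>?U - S. newm n p q m x y) = (\<Sum>y\<in>?K - S. newm n p q m x y) + (\<Sum>y\<in>?U - ?K. newm n p q m x y)"
      unfolding e1 by (rule sum.union_disjoint) auto
    also have "\<dots> = (\<Sum>y\<in>?K - ?r ` S. m (?r x) y) + (\<Sum>y\<in>?U - ?K. m (?r x) y)" using a b by simp
    also have "\<dots> = (\<Sum>y\<in>?U - ?r ` S. m (?r x) y)"
      unfolding e2 by (rule sum.union_disjoint[symmetric]) auto
    finally show ?thesis .
  qed
  have "ccut n (newm n p q m) S = (\<Sum>x\<in>S. \<Sum>y\<in>?U - ?r ` S. m (?r x) y)"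
    unfolding ccut_def using inner by simp
  also have "\<dots> = (\<Sum>x\<in>?r ` S. \<Sum>y\<in>?U - ?r ` S. m x y)"
    by (rule sum.reindex[symmetric, unfolded o_def]) (meson inj_on_subset rho_inj subset_UNIV)
  finally show ?thesis unfolding ccut_def .
qed

lemma Sh_out1:
  assumes s: "symm m" and S: "S \<subseteq> {..n}" "S \<inter> {p..q} = {}"
  shows "ccut n (newm n p q m) S = ccut n m S"
proof -
  let ?U = "{..n}" and ?K = "{p..q}"
  have inner: "(\<Sum>y\<in>?U - S. newm n p q m x y) = (\<Sum>y\<in>?U - S. m x y)" if x: "x \<in> S" for x
  proof -
    have xo: "x \<le> n" "\<not> (p \<le> x \<and> x \<le> q)" using x S by auto
    define T where "T = ?U - S - ?K"
    have e1: "?U - S = T \<union> ?K" using S qn unfolding T_def by auto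
    have a: "(\<Sum>y\<in>T. newm n p q m x y) = (\<Sum>y\<in>T. m x y)" unfolding T_def
      by (rule sum.cong) (use xo in \<open>auto simp: newm_def rho_out\<close>)
    have b: "(\<Sum>y\<in>?K. newm n p q m x y) = (\<Sum>y\<in>?K. m x y)"
    proof -
      have "(\<Sum>y\<in>?K. newm n p q m x y) = (\<Sum>y\<in>?K. cntf n p q m x y)"
        by (rule sum.cong) (use xo in \<open>auto simp: newm_def\<close>)
      also have "\<dots> = (\<Sum>y\<in>?K. m y x)" by (rule F4[OF xo])
      also have "\<dots> = (\<Sum>y\<in>?K. m x y)" using symmD[OF s] by simp
      finally show ?thesis .
    qed
    have d: "T \<inter> ?K = {}" "finite T" unfolding T_def by auto
    show ?thesis unfolding e1 using a b d by (simp add: sum.union_disjoint)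
  qed
  show ?thesis unfolding ccut_def using inner by simp
qed

lemma Sh_out2:
  assumes s: "symm m" and S: "S \<subseteq> {..n}" "{p..q} \<subseteq> S"
  shows "ccut n (newm n p q m) S = ccut n m S"
proof -
  have "ccut n (newm n p q m) S = ccut n (newm n p q m) ({..n} - S)"
    by (rule cut_compl[OF symm_newm[OF s] S(1)])
  also have "\<dots> = ccut n m ({..n} - S)" by (rule Sh_out1[OF s]) (use S in auto)
  also have "\<dots> = ccut n m S" by (rule cut_compl[OF s S(1), symmetric])
  finally show ?thesis .
qed

end



lemma sorted_concat_map: "(\<And>x. x \<in> set xs \<Longrightarrow> sorted (f x)) \<Longrightarrow>
   sorted_wrt (\<lambda>x y. \<forall>a\<in>set (f x). \<forall>b\<in>set (f y). a \<le> b) xs \<Longrightarrow> sorted (concat (map f xs))"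
  by (induction xs) (auto simp: sorted_append)

lemma sorted_const: "\<forall>x\<in>set xs. x = (c::nat) \<Longrightarrow> sorted xs"
  by (induction xs) auto

context blk
begin

definition rank :: "nat \<Rightarrow> nat" where
  "rank r = (if r < p then p - 1 - r else p + n - r)"

lemma sorted_fst_L: "sorted (map fst (LL m))"
proof -
  have "map fst (LL m) = concat (map (\<lambda>i. map fst (concat (map (\<lambda>r. replicate (m i r) (i, r)) oo))) [p..<q+1])"
    unfolding crossing_list_def by (simp add: map_concat o_def)
  also have "sorted \<dots>"
  proof (rule sorted_concat_map)
    fix i show "sorted (map fst (concat (map (\<lambda>r. replicate (m i r) (i, r)) oo)))"
      by (rule sorted_const[where c=i]) auto
  next
    show "sorted_wrt (\<lambda>x y. \<forall>a\<in>set (map fst (concat (map (\<lambda>r. replicate (m x r) (x, r)) oo))).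
            \<forall>b\<in>set (map fst (concat (map (\<lambda>r. replicate (m y r) (y, r)) oo))). a \<le> b) [p..<q+1]"
      by (rule sorted_wrt_mono_rel[OF _ sorted_wrt_upt]) auto
  qed
  finally show ?thesis .
qed

lemma sorted_oo: "sorted_wrt (\<lambda>r r'. rank r < rank r') oo"
  unfolding outer_order_def sorted_wrt_append sorted_wrt_rev
proof (intro conjI)
  show "sorted_wrt (\<lambda>x y. rank y < rank x) [0..<p]"
    by (rule sorted_wrt_mono_rel[OF _ sorted_wrt_upt]) (auto simp: rank_def)
  show "sorted_wrt (\<lambda>x y. rank y < rank x) [q + 1..<n + 1]"
    by (rule sorted_wrt_mono_rel[OF _ sorted_wrt_upt]) (use pq in \<open>auto simp: rank_def\<close>)
  show "\<forall>x\<in>set (rev [0..<p]). \<forall>y\<in>set (rev [q + 1..<n + 1]). rank x < rank y"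
    using pq by (auto simp: rank_def)
qed

lemma rank_mono:
  assumes nc: "nc m" and s: "symm m" and ii: "p \<le> i" "i < i'" "i' \<le> q"
    and r: "r \<in> set oo" and r': "r' \<in> set oo" and mr: "m i r \<noteq> 0" and mr': "m i' r' \<noteq> 0"
  shows "rank r \<le> rank r'"
proof -
  have ro: "r \<le> n" "r < p \<or> q < r" and ro': "r' \<le> n" "r' < p \<or> q < r'" using r r' set_oo by auto
  show ?thesis
  proof (cases "r < p")
    case True
    show ?thesis
    proof (cases "r' < p")
      case True
      have "r' \<le> r"
      proof (rule ccontr)
        assume "\<not> r' \<le> r"
        then have "r < r'" by simp
        moreover have "m r i \<noteq> 0" using mr symmD[OF s, of r i] by simp
        moreover have "r' < i" using \<open>r' < p\<close> ii by linarith
        moreover have "m r' i' \<noteq> 0" using mr' symmD[OF s, of r' i'] by simp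
        ultimately show False using ncE[OF nc _ _ ii(2)] by blast
      qed
      then show ?thesis using \<open>r < p\<close> True unfolding rank_def by auto
    next
      case False
      then show ?thesis using \<open>r < p\<close> ro' unfolding rank_def by auto
    qed
  next
    case False
    then have rq: "q < r" using ro by auto
    show ?thesis
    proof (cases "r' < p")
      case True
      have "m r' i' \<noteq> 0" using mr' symmD[OF s, of r' i'] by simp
      moreover have "r' < i" "i' < r" using True ii rq by linarith+
      ultimately have False using ncE[OF nc _ ii(2) _ _ mr] by blast
      then show ?thesis ..
    next
      case False
      then have rq': "q < r'" using ro' by auto
      have "r' \<le> r"
      proof (rule ccontr)
        assume "\<not> r' \<le> r"
        then have "r < r'" by simp
        moreover have "i' < r" using ii rq by linarith
        ultimately show False using ncE[OF nc ii(2) _ _ mr mr'] by blast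
      qed
      then show ?thesis using rq rq' ro ro' pq unfolding rank_def by auto
    qed
  qed
qed

lemma sorted_rank:
  assumes nc: "nc m" and s: "symm m"
  shows "sorted (map (rank \<circ> snd) (LL m))"
proof -
  have "map (rank \<circ> snd) (LL m) = concat (map (\<lambda>i. concat (map (\<lambda>r. replicate (m i r) (rank r)) oo)) [p..<q+1])"
    unfolding crossing_list_def by (simp add: map_concat o_def)
  also have "sorted \<dots>"
  proof (rule sorted_concat_map)
    fix i show "sorted (concat (map (\<lambda>r. replicate (m i r) (rank r)) oo))"
    proof (rule sorted_concat_map)
      show "sorted_wrt (\<lambda>x y. \<forall>a\<in>set (replicate (m i x) (rank x)). \<forall>b\<in>set (replicate (m i y) (rank y)). a \<le> b) oo"
        by (rule sorted_wrt_mono_rel[OF _ sorted_oo]) auto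
    qed simp
  next
    show "sorted_wrt (\<lambda>x y. \<forall>a\<in>set (concat (map (\<lambda>r. replicate (m x r) (rank r)) oo)).
            \<forall>b\<in>set (concat (map (\<lambda>r. replicate (m y r) (rank r)) oo)). a \<le> b) [p..<q+1]"
    proof (rule sorted_wrt_mono_rel[OF _ sorted_wrt_upt], intro ballI)
      fix i i' a b
      assume i: "i \<in> set [p..<q+1]" "i' \<in> set [p..<q+1]" "i < i'"
        and a: "a \<in> set (concat (map (\<lambda>r. replicate (m i r) (rank r)) oo))"
        and b: "b \<in> set (concat (map (\<lambda>r. replicate (m i' r) (rank r)) oo))"
      from a obtain r where r: "r \<in> set oo" "m i r \<noteq> 0" "a = rank r" by (auto split: if_splits)
      from b obtain r' where r': "r' \<in> set oo" "m i' r' \<noteq> 0" "b = rank r'" by (auto split: if_splits)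
      have "p \<le> i" "i' \<le> q" using i by auto
      from rank_mono[OF nc s this(1) i(3) this(2) r(1) r'(1) r(2) r'(2)] show "a \<le> b" using r r' by simp
    qed
  qed
  finally show ?thesis .
qed

lemma NN_mono:
  assumes nc: "nc m" and s: "symm m" and e1: "(r1, i1) \<in> set (NN m)" and e2: "(r2, i2) \<in> set (NN m)"
    and rk: "rank r1 < rank r2"
  shows "i1 \<le> i2"
proof -
  let ?K = "length (LL m)"
  obtain k1 where k1: "k1 < ?K" "NN m ! k1 = (r1, i1)" using e1 len_NN by (metis in_set_conv_nth)
  obtain k2 where k2: "k2 < ?K" "NN m ! k2 = (r2, i2)" using e2 len_NN by (metis in_set_conv_nth)
  have x1: "r1 = snd (LL m ! k1)" "i1 = p + q - fst (LL m ! (?K - Suc k1))" using NN_nth[OF k1(1)] k1(2) by auto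
  have x2: "r2 = snd (LL m ! k2)" "i2 = p + q - fst (LL m ! (?K - Suc k2))" using NN_nth[OF k2(1)] k2(2) by auto
  have "k1 < k2"
  proof (rule ccontr)
    assume "\<not> k1 < k2"
    then have "k2 \<le> k1" by simp
    from sorted_nth_mono[OF sorted_rank[OF nc s] this] k1(1)
    have "rank r2 \<le> rank r1" using x1 x2 k2(1) \<open>k2 \<le> k1\<close> by simp
    with rk show False by simp
  qed
  then have "?K - Suc k2 \<le> ?K - Suc k1" by simp
  from sorted_nth_mono[OF sorted_fst_L[of m] this] k1(1) k2(1)
  have "fst (LL m ! (?K - Suc k2)) \<le> fst (LL m ! (?K - Suc k1))" by simp
  then show ?thesis using x1 x2 by (simp add: diff_le_mono2)
qed

lemma H1: "p \<le> i \<Longrightarrow> i \<le> q \<Longrightarrow> p \<le> j \<Longrightarrow> j \<le> q \<Longrightarrow> newm n p q m i j = m (p + q - i) (p + q - j)"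
  unfolding newm_def refl_pos_def by simp

lemma H2: "\<not> (p \<le> i \<and> i \<le> q) \<Longrightarrow> \<not> (p \<le> j \<and> j \<le> q) \<Longrightarrow> newm n p q m i j = m i j"
  unfolding newm_def refl_pos_def by auto

lemma H3: "p \<le> i \<Longrightarrow> i \<le> q \<Longrightarrow> \<not> (p \<le> j \<and> j \<le> q) \<Longrightarrow> newm n p q m i j \<noteq> 0 \<Longrightarrow> (j, i) \<in> set (NN m)"
  unfolding newm_def using cntf_nz by auto

lemma H4: "\<not> (p \<le> i \<and> i \<le> q) \<Longrightarrow> p \<le> j \<Longrightarrow> j \<le> q \<Longrightarrow> newm n p q m i j \<noteq> 0 \<Longrightarrow> (i, j) \<in> set (NN m)"
  unfolding newm_def using cntf_nz by auto

lemma NS1: "(r, i) \<in> set (NN m) \<Longrightarrow> r \<le> n \<and> (r < p \<or> q < r)"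
  using set_NN(1) set_oo by force

lemma NS2: "(r, i) \<in> set (NN m) \<Longrightarrow> \<exists>i0. p \<le> i0 \<and> i0 \<le> q \<and> m i0 r \<noteq> 0"
  using set_NN(4) by fastforce

lemma NS3: "(r, i) \<in> set (NN m) \<Longrightarrow> \<exists>r0. r0 \<le> n \<and> (r0 < p \<or> q < r0) \<and> m (p + q - i) r0 \<noteq> 0"
proof -
  assume "(r, i) \<in> set (NN m)"
  from set_NN(5)[OF this] obtain r0 where "r0 \<in> set oo" "0 < m (p + q - i) r0" by blast
  then show ?thesis using set_oo by force
qed

lemma nc_newm:
  assumes w: "wfd n m" and nc: "nc m"
  shows "nc (newm n p q m)"
  unfolding nc_def
proof (intro allI impI)
  fix a b c d :: nat assume o: "a < c \<and> c < b \<and> b < d"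
  have s: "symm m" using w unfolding wfd_def by simp
  note sy = symmD[OF s]
  let ?M = "newm n p q m"
  show "?M a b = 0 \<or> ?M c d = 0"
  proof (rule ccontr)
    assume "\<not> (?M a b = 0 \<or> ?M c d = 0)"
    then have ab: "?M a b \<noteq> 0" and cd: "?M c d \<noteq> 0" by auto
    have ac: "a < c" and cb: "c < b" and bd: "b < d" using o by auto
    show False
    proof (cases "p \<le> c \<and> c \<le> q")
      case cI: True
      show ?thesis
      proof (cases "p \<le> b \<and> b \<le> q")
        case bI: True
        show ?thesis
        proof (cases "p \<le> a")
          case aI: True
          show ?thesis
          proof (cases "d \<le> q")
            case dI: True
            have m1: "m (p+q-a) (p+q-b) \<noteq> 0" using ab H1[of a b m] aI bI cI ac by auto
            have m2: "m (p+q-c) (p+q-d) \<noteq> 0" using cd H1[of c d m] cI dI bI bd by auto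
            have x1: "m (p+q-d) (p+q-c) \<noteq> 0" using m2 sy by metis
            have x2: "m (p+q-b) (p+q-a) \<noteq> 0" using m1 sy by metis
            have "p+q-d < p+q-b" "p+q-b < p+q-c" "p+q-c < p+q-a" using ac cb bd dI by linarith+
            from ncE[OF nc this x1 x2] show False .
          next
            case dO: False
            have m1: "m (p+q-a) (p+q-b) \<noteq> 0" using ab H1[of a b m] aI bI cI ac cb by auto
            have "(d, c) \<in> set (NN m)" using H3[of c d m] cI dO cd by auto
            from NS3[OF this] obtain r0 where r0: "r0 \<le> n" "r0 < p \<or> q < r0" "m (p+q-c) r0 \<noteq> 0" by blast
            have x2: "m (p+q-b) (p+q-a) \<noteq> 0" using m1 sy by metis
            have o1: "p+q-b < p+q-c" "p+q-c < p+q-a" "p \<le> p+q-b" "p+q-a \<le> q" using ac cb bI aI by linarith+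
            show False
            proof (cases "r0 < p")
              case True
              have x3: "m r0 (p+q-c) \<noteq> 0" using r0(3) sy by metis
              have "r0 < p+q-b" using True o1 by linarith
              from ncE[OF nc this o1(1,2) x3 x2] show False .
            next
              case False
              then have "p+q-a < r0" using r0(2) o1 by linarith
              from ncE[OF nc o1(1,2) this x2 r0(3)] show False .
            qed
          qed
        next
          case aO: False
          show ?thesis
          proof (cases "d \<le> q")
            case dI: True
            have m2: "m (p+q-c) (p+q-d) \<noteq> 0" using cd H1[of c d m] cI dI bd cb by auto
            have "(a, b) \<in> set (NN m)" using H4[of a b m] aO bI ab by auto
            from NS3[OF this] obtain r0 where r0: "r0 \<le> n" "r0 < p \<or> q < r0" "m (p+q-b) r0 \<noteq> 0" by blast
            have x2: "m (p+q-d) (p+q-c) \<noteq> 0" using m2 sy by metis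
            have o1: "p+q-d < p+q-b" "p+q-b < p+q-c" "p \<le> p+q-d" "p+q-c \<le> q" using cI cb bd dI by linarith+
            show False
            proof (cases "r0 < p")
              case True
              have x3: "m r0 (p+q-b) \<noteq> 0" using r0(3) sy by metis
              have "r0 < p+q-d" using True o1 by linarith
              from ncE[OF nc this o1(1,2) x3 x2] show False .
            next
              case False
              then have "p+q-c < r0" using r0(2) o1 by linarith
              from ncE[OF nc o1(1,2) this x2 r0(3)] show False .
            qed
          next
            case dO: False
            have e1: "(a, b) \<in> set (NN m)" using H4[of a b m] aO bI ab by auto
            have e2: "(d, c) \<in> set (NN m)" using H3[of c d m] cI dO cd bd by auto
            have "d \<le> n" using NS1[OF e2] by simp
            then have "rank a < rank d" using aO dO bd bI unfolding rank_def by auto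
            from NN_mono[OF nc s e1 e2 this] cb show False by simp
          qed
        qed
      next
        case bO: False
        have bq: "q < b" using bO cI cb by auto
        have dO: "\<not> (p \<le> d \<and> d \<le> q)" using bq bd by auto
        have e2: "(d, c) \<in> set (NN m)" using H3[of c d m] cI dO cd by auto
        show ?thesis
        proof (cases "p \<le> a")
          case aI: True
          have e1: "(b, a) \<in> set (NN m)" using H3[of a b m] aI bO ab ac cI by auto
          have "d \<le> n" using NS1[OF e2] by simp
          then have "rank d < rank b" using bq bd pq unfolding rank_def by auto
          from NN_mono[OF nc s e2 e1 this] ac show False by simp
        next
          case aO: False
          from NS2[OF e2] obtain i0 where i0: "p \<le> i0" "i0 \<le> q" "m i0 d \<noteq> 0" by blast
          have "m a b \<noteq> 0" using ab H2[of a b m] aO bO by auto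
          moreover have "a < i0" "i0 < b" using aO i0 bq by linarith+
          ultimately show False using ncE[OF nc _ _ bd _ i0(3)] by blast
        qed
      qed
    next
      case cO: False
      show ?thesis
      proof (cases "p \<le> b \<and> b \<le> q")
        case bI: True
        have cp: "c < p" using cO cb bI by auto
        have aO: "\<not> (p \<le> a \<and> a \<le> q)" using ac cp by auto
        have e1: "(a, b) \<in> set (NN m)" using H4[of a b m] aO bI ab by auto
        show ?thesis
        proof (cases "d \<le> q")
          case dI: True
          have e2: "(c, d) \<in> set (NN m)" using H4[of c d m] cO dI bI bd cd by auto
          have "rank c < rank a" using ac cp unfolding rank_def by auto
          from NN_mono[OF nc s e2 e1 this] bd show False by simp
        next
          case dO: False
          from NS2[OF e1] obtain i0 where i0: "p \<le> i0" "i0 \<le> q" "m i0 a \<noteq> 0" by blast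
          have x: "m a i0 \<noteq> 0" using i0(3) sy by metis
          have "m c d \<noteq> 0" using cd H2[of c d m] cO dO by auto
          moreover have "c < i0" "i0 < d" using cp i0 dO bd bI by linarith+
          ultimately show False using ncE[OF nc ac _ _ x] by blast
        qed
      next
        case bO: False
        show ?thesis
        proof (cases "p \<le> a")
          case True
          show ?thesis
          proof (cases "a \<le> q")
            case aI: True
            have cq: "q < c" using cO ac True by auto
            have e1: "(b, a) \<in> set (NN m)" using H3[of a b m] True aI bO ab by auto
            from NS2[OF e1] obtain i0 where i0: "p \<le> i0" "i0 \<le> q" "m i0 b \<noteq> 0" by blast
            have dO: "\<not> (p \<le> d \<and> d \<le> q)" using cq cb bd by auto
            have "m c d \<noteq> 0" using cd H2[of c d m] cO dO by auto
            moreover have "i0 < c" using i0 cq by linarith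
            ultimately show False using ncE[OF nc _ cb bd i0(3)] by blast
          next
            case aO': False
            have aO: "\<not> (p \<le> a \<and> a \<le> q)" using aO' by auto
            have qa: "q < a" using aO' by simp
            have dO: "\<not> (p \<le> d \<and> d \<le> q)" using qa ac cb bd by auto
            have "m a b \<noteq> 0" using ab H2[of a b m] aO bO by auto
            moreover have "m c d \<noteq> 0" using cd H2[of c d m] cO dO by auto
            ultimately show False using ncE[OF nc ac cb bd] by blast
          qed
        next
          case aO': False
          have aO: "\<not> (p \<le> a \<and> a \<le> q)" using aO' by auto
          show ?thesis
          proof (cases "p \<le> d \<and> d \<le> q")
            case dI: True
            have bp: "b < p" using bO bd dI by auto
            have e2: "(c, d) \<in> set (NN m)" using H4[of c d m] cO dI cd by auto
            from NS2[OF e2] obtain i0 where i0: "p \<le> i0" "i0 \<le> q" "m i0 c \<noteq> 0" by blast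
            have x: "m c i0 \<noteq> 0" using i0(3) sy by metis
            have "m a b \<noteq> 0" using ab H2[of a b m] aO bO by auto
            moreover have "b < i0" using bp i0 by linarith
            ultimately show False using ncE[OF nc ac cb _ _ x] by blast
          next
            case dO: False
            have "m a b \<noteq> 0" using ab H2[of a b m] aO bO by auto
            moreover have "m c d \<noteq> 0" using cd H2[of c d m] cO dO by auto
            ultimately show False using ncE[OF nc ac cb bd] by blast
          qed
        qed
      qed
    qed
  qed
qed

lemma valid_newm: "wfd n m \<Longrightarrow> nc m \<Longrightarrow> wfd n (newm n p q m) \<and> nc (newm n p q m)"
proof -
  assume w: "wfd n m" and nc: "nc m"
  have s: "symm m" and d: "\<forall>i. m i i = 0" and z: "\<forall>i j. n < i \<or> n < j \<longrightarrow> m i j = 0"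
    using w unfolding wfd_def by auto
  have "symm (newm n p q m)" by (rule symm_newm[OF s])
  moreover have "\<forall>i. newm n p q m i i = 0" using d unfolding newm_def by simp
  moreover have "\<forall>i j. n < i \<or> n < j \<longrightarrow> newm n p q m i j = 0"
  proof (intro allI impI)
    fix i j :: nat assume h: "n < i \<or> n < j"
    show "newm n p q m i j = 0"
    proof (cases "(p \<le> i \<and> i \<le> q) = (p \<le> j \<and> j \<le> q)")
      case True
      then have "\<not> (p \<le> i \<and> i \<le> q)" "\<not> (p \<le> j \<and> j \<le> q)" using h qn by auto
      then show ?thesis using H2[of i j m] z h by simp
    next
      case False
      show ?thesis
      proof (rule ccontr)
        assume nz: "newm n p q m i j \<noteq> 0"
        show False
        proof (cases "p \<le> i \<and> i \<le> q")
          case True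
          then have "(j, i) \<in> set (NN m)" using H3[of i j m] False nz by auto
          then show False using NS1 h True qn by fastforce
        next
          case f2: False
          then have "(i, j) \<in> set (NN m)" using H4[of i j m] False nz by auto
          then show False using NS1 h False f2 qn by fastforce
        qed
      qed
    qed
  qed
  ultimately show ?thesis unfolding wfd_def using nc_newm[OF w nc] by blast
qed

lemma cin: "p \<le> a \<Longrightarrow> a \<le> b \<Longrightarrow> b \<le> q \<Longrightarrow> ccut n (newm n p q m) {a..b} = ccut n m {p+q-b..p+q-a}"
  using Sh_in[of "{a..b}" m] rho_interval[of a b] by auto

lemma cout: "symm m \<Longrightarrow> a \<le> b \<Longrightarrow> b \<le> n \<Longrightarrow> (b < p \<or> q < a \<or> (a \<le> p \<and> q \<le> b)) \<Longrightarrow>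
   ccut n (newm n p q m) {a..b} = ccut n m {a..b}"
proof -
  assume s: "symm m" and ab: "a \<le> b" "b \<le> n" and h: "b < p \<or> q < a \<or> (a \<le> p \<and> q \<le> b)"
  from h show ?thesis
  proof (elim disjE)
    assume "b < p" then show ?thesis by (intro Sh_out1[OF s]) (use ab in auto)
  next
    assume "q < a" then show ?thesis by (intro Sh_out1[OF s]) (use ab in auto)
  next
    assume "a \<le> p \<and> q \<le> b" then show ?thesis by (intro Sh_out2[OF s]) (use ab in auto)
  qed
qed

lemma row_cut: "(\<forall>i. m i i = 0) \<Longrightarrow> i \<le> n \<Longrightarrow> (\<Sum>k\<le>n. m i k) = ccut n m {i}"
proof -
  assume d: "\<forall>i. m i i = 0" and i: "i \<le> n"
  have "(\<Sum>k\<le>n. m i k) = m i i + (\<Sum>k\<in>{..n}-{i}. m i k)"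
    using i by (simp add: sum.remove)
  then show ?thesis using d unfolding ccut_def by simp
qed

lemma rho_bij: "bij_betw (refl_pos p q) {1..n} {1..n}"
proof -
  have im: "refl_pos p q ` {1..n} = {1..n}"
  proof (intro equalityI subsetI)
    fix x assume "x \<in> refl_pos p q ` {1..n}"
    then show "x \<in> {1..n}" using p1 qn unfolding refl_pos_def by auto
  next
    fix x assume x: "x \<in> {1..n}"
    then have "refl_pos p q x \<in> {1..n}" using p1 qn unfolding refl_pos_def by auto
    moreover have "x = refl_pos p q (refl_pos p q x)" by simp
    ultimately show "x \<in> refl_pos p q ` {1..n}" by (rule rev_image_eqI)
  qed
  show ?thesis unfolding bij_betw_def using im inj_on_subset[OF rho_inj] by auto
qed

lemma closure:
  assumes x: "(sg, m) \<in> arc_diagrams n l linf"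
  shows "shear n (p, q) (sg, m) \<in> arc_diagrams n l linf"
proof -
  have bs: "bij_betw sg {1..n} {1..n}" and fx: "\<forall>k. k \<notin> {1..n} \<longrightarrow> sg k = k"
    and w: "wfd n m" and nc: "nc m"
    and val: "\<forall>i\<in>{1..n}. (\<Sum>k\<le>n. m i k) = l (sg i)" and vinf: "(\<Sum>k\<le>n. m 0 k) = linf"
    using x unfolding arc_diagrams_def wfd_def nc_def symm_def by auto
  note v = valid_newm[OF w nc]
  let ?M = "newm n p q m" and ?r = "refl_pos p q"
  have s: "symm m" and d: "\<forall>i. m i i = 0" using w unfolding wfd_def by auto
  have d': "\<forall>i. ?M i i = 0" using v unfolding wfd_def by auto
  have rowc: "ccut n ?M {i} = ccut n m {?r i}" if i: "i \<le> n" for i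
  proof (cases "p \<le> i \<and> i \<le> q")
    case True
    then show ?thesis using Sh_in[of "{i}" m] by simp
  next
    case False
    then show ?thesis using Sh_out1[OF s, of "{i}"] i rho_out by auto
  qed
  have b1: "bij_betw (\<lambda>k. sg (?r k)) {1..n} {1..n}"
    using bij_betw_trans[OF rho_bij bs] by (simp add: o_def)
  have b2: "\<forall>k. k \<notin> {1..n} \<longrightarrow> sg (?r k) = k"
  proof (intro allI impI)
    fix k :: nat assume "k \<notin> {1..n}"
    moreover then have "?r k = k" using p1 qn rho_out by auto
    ultimately show "sg (?r k) = k" using fx by simp
  qed
  have b3: "\<forall>i\<in>{1..n}. (\<Sum>k\<le>n. ?M i k) = l (sg (?r i))"
  proof
    fix i assume i: "i \<in> {1..n}"
    have ri: "?r i \<in> {1..n}" using rho_bij i unfolding bij_betw_def by auto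
    have "(\<Sum>k\<le>n. ?M i k) = ccut n ?M {i}" using row_cut[of "newm n p q m", OF d'] i by auto
    also have "\<dots> = ccut n m {?r i}" using rowc i by auto
    also have "\<dots> = (\<Sum>k\<le>n. m (?r i) k)" using row_cut[of m, OF d] ri by auto
    also have "\<dots> = l (sg (?r i))" using val ri by auto
    finally show "(\<Sum>k\<le>n. ?M i k) = l (sg (?r i))" .
  qed
  have b4: "(\<Sum>k\<le>n. ?M 0 k) = linf"
  proof -
    have r0: "?r 0 = 0" using p1 rho_out by auto
    have "(\<Sum>k\<le>n. ?M 0 k) = ccut n ?M {0}" using row_cut[of "newm n p q m", OF d'] by auto
    also have "\<dots> = ccut n m {0}" using rowc[of 0] r0 by simp
    also have "\<dots> = (\<Sum>k\<le>n. m 0 k)" using row_cut[of m, OF d] by auto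
    finally show ?thesis using vinf by simp
  qed
  show ?thesis unfolding shear_eq arc_diagrams_def
    using b1 b2 b3 b4 v unfolding wfd_def nc_def symm_def by auto
qed

end



lemma cut_single: "i \<le> n \<Longrightarrow> ccut n m {i} = (\<Sum>y\<in>{..n}-{i}. m i y)"
  unfolding ccut_def by simp

lemma mij_from_cuts:
  assumes s: "symm m" and ij: "1 \<le> i" "i < j" "j \<le> n"
  shows "2 * m i j + ccut n m {i..j} + ccut n m {i+1..j-1} = ccut n m {i..j-1} + ccut n m {i+1..j}"
proof -
  let ?O = "{i+1..j-1}"
  have u1: "ccut n m (?O \<union> {j}) + 2 * MM m ?O {j} = ccut n m ?O + ccut n m {j}"
    by (rule cut_union[OF s]) (use ij in auto)
  have u2: "ccut n m ({i..j-1} \<union> {j}) + 2 * MM m {i..j-1} {j} = ccut n m {i..j-1} + ccut n m {j}"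
    by (rule cut_union[OF s]) (use ij in auto)
  have e1: "?O \<union> {j} = {i+1..j}" using ij by auto
  have e2: "{i..j-1} \<union> {j} = {i..j}" using ij by auto
  have e3: "{i..j-1} = {i} \<union> ?O" using ij by auto
  have mm: "MM m {i..j-1} {j} = MM m {i} {j} + MM m ?O {j}"
    unfolding e3 by (rule MM_union1) (use ij in auto)
  have mm1: "MM m {i} {j} = m i j" unfolding MM_def by simp
  show ?thesis using u1 u2 mm mm1 unfolding e1 e2 by linarith
qed

lemma det:
  assumes w1: "wfd n m1" and w2: "wfd n m2"
    and c: "\<And>a b. 1 \<le> a \<Longrightarrow> a \<le> b \<Longrightarrow> b \<le> n \<Longrightarrow> ccut n m1 {a..b} = ccut n m2 {a..b}"
  shows "m1 = m2"
proof -
  have s1: "symm m1" and s2: "symm m2" using w1 w2 unfolding wfd_def by auto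
  have c': "ccut n m1 {a..b} = ccut n m2 {a..b}" if "1 \<le> a" "b \<le> n" for a b
  proof (cases "a \<le> b")
    case True then show ?thesis using c that by auto
  next
    case False then have "{a..b} = {}" by auto
    then show ?thesis by simp
  qed
  have in1: "m1 i j = m2 i j" if "1 \<le> i" "i < j" "j \<le> n" for i j
  proof -
    note A = mij_from_cuts[OF s1 that] and B = mij_from_cuts[OF s2 that]
    have "ccut n m1 {i..j} = ccut n m2 {i..j}" "ccut n m1 {i+1..j-1} = ccut n m2 {i+1..j-1}"
      "ccut n m1 {i..j-1} = ccut n m2 {i..j-1}" "ccut n m1 {i+1..j} = ccut n m2 {i+1..j}"
      using c' that by auto
    then show ?thesis using A B by linarith
  qed
  have in2: "m1 i j = m2 i j" if "1 \<le> i" "1 \<le> j" "i \<le> n" "j \<le> n" for i j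
  proof -
    consider "i < j" | "i = j" | "j < i" by linarith
    then show ?thesis
    proof cases
      case 1 then show ?thesis using in1 that by auto
    next
      case 2 then show ?thesis using w1 w2 unfolding wfd_def by auto
    next
      case 3 then have "m1 j i = m2 j i" using in1 that by auto
      then show ?thesis using symmD[OF s1, of i j] symmD[OF s2, of i j] by simp
    qed
  qed
  have z: "m1 j 0 = m2 j 0" if "1 \<le> j" "j \<le> n" for j
  proof -
    have "ccut n m1 {j} = ccut n m2 {j}" using c[of j j] that by auto
    then have eq: "(\<Sum>y\<in>{..n}-{j}. m1 j y) = (\<Sum>y\<in>{..n}-{j}. m2 j y)" using that by (simp add: cut_single)
    have sp: "{..n}-{j} = insert 0 ({1..n}-{j})" using that by auto
    have r: "(\<Sum>y\<in>{1..n}-{j}. m1 j y) = (\<Sum>y\<in>{1..n}-{j}. m2 j y)"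
      by (rule sum.cong) (use in2 that in auto)
    show ?thesis using eq r unfolding sp by simp
  qed
  show ?thesis
  proof (intro ext)
    fix i j
    show "m1 i j = m2 i j"
    proof (cases "n < i \<or> n < j")
      case True then show ?thesis using w1 w2 unfolding wfd_def by auto
    next
      case False
      show ?thesis
      proof (cases "i = 0")
        case True
        show ?thesis
        proof (cases "j = 0")
          case True then show ?thesis using w1 w2 \<open>i = 0\<close> unfolding wfd_def by auto
        next
          case False
          then have "m1 j 0 = m2 j 0" using z \<open>\<not> (n < i \<or> n < j)\<close> by auto
          then show ?thesis using \<open>i = 0\<close> symmD[OF s1, of 0 j] symmD[OF s2, of 0 j] by simp
        qed
      next
        case i0: False
        show ?thesis
        proof (cases "j = 0")
          case True then show ?thesis using z i0 \<open>\<not> (n < i \<or> n < j)\<close> by auto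
        next
          case False then show ?thesis using in2 i0 \<open>\<not> (n < i \<or> n < j)\<close> by auto
        qed
      qed
    qed
  qed
qed

definition NP :: "nat \<Rightarrow> nat \<Rightarrow> nat \<Rightarrow> nat \<Rightarrow> bool" where
  "NP p q a b \<longleftrightarrow> b < p \<or> q < a \<or> (p \<le> a \<and> b \<le> q) \<or> (a \<le> p \<and> q \<le> b)"

lemma reduce:
  assumes v: "wfd n m1" "nc m1" "wfd n m2" "nc m2" and pq: "1 \<le> p" "p \<le> q" "q \<le> n"
    and H: "\<And>a b. 1 \<le> a \<Longrightarrow> a \<le> b \<Longrightarrow> b \<le> n \<Longrightarrow> NP p q a b \<Longrightarrow> G a b \<Longrightarrow> ccut n m1 {a..b} = ccut n m2 {a..b}"
    and C: "\<And>a b. 1 \<le> a \<Longrightarrow> a \<le> b \<Longrightarrow> b \<le> n \<Longrightarrow> G a b \<Longrightarrow> \<not> NP p q a b \<Longrightarrow>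
       (a < p \<longrightarrow> G a (p-1) \<and> G p b \<and> G p q \<and> G a q \<and> G (b+1) q) \<and>
       (p < a \<longrightarrow> G (q+1) b \<and> G a q \<and> G p q \<and> G p b \<and> G p (a-1))"
    and ab: "1 \<le> a" "a \<le> b" "b \<le> n" "G a b"
  shows "ccut n m1 {a..b} = ccut n m2 {a..b}"
proof (cases "NP p q a b")
  case True then show ?thesis using H ab by blast
next
  case False
  note Ca = C[OF ab(1-4) False]
  show ?thesis
  proof (cases "a < p")
    case True
    have pl: "p \<le> b" "b < q" using False True ab unfolding NP_def by auto
    have g: "G a (p-1)" "G p b" "G p q" "G a q" "G (b+1) q" using Ca True by auto
    show ?thesis
    proof (rule det_left[OF v True pl pq(3)])
      show "ccut n m1 {a..p-1} = ccut n m2 {a..p-1}" by (rule H) (use ab True g pl pq in \<open>auto simp: NP_def\<close>)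
      show "ccut n m1 {p..b} = ccut n m2 {p..b}" by (rule H) (use ab True g pl pq in \<open>auto simp: NP_def\<close>)
      show "ccut n m1 {p..q} = ccut n m2 {p..q}" by (rule H) (use ab True g pl pq in \<open>auto simp: NP_def\<close>)
      show "ccut n m1 {a..q} = ccut n m2 {a..q}" by (rule H) (use ab True g pl pq in \<open>auto simp: NP_def\<close>)
      show "ccut n m1 {b+1..q} = ccut n m2 {b+1..q}" by (rule H) (use ab True g pl pq in \<open>auto simp: NP_def\<close>)
    qed
  next
    case f2: False
    have pr: "p < a" "a \<le> q" "q < b" using False f2 ab unfolding NP_def by auto
    have g: "G (q+1) b" "G a q" "G p q" "G p b" "G p (a-1)" using Ca pr by auto
    show ?thesis
    proof (rule det_right[OF v pr ab(3)])
      show "ccut n m1 {q+1..b} = ccut n m2 {q+1..b}" by (rule H) (use ab pr g pq in \<open>auto simp: NP_def\<close>)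
      show "ccut n m1 {a..q} = ccut n m2 {a..q}" by (rule H) (use ab pr g pq in \<open>auto simp: NP_def\<close>)
      show "ccut n m1 {p..q} = ccut n m2 {p..q}" by (rule H) (use ab pr g pq in \<open>auto simp: NP_def\<close>)
      show "ccut n m1 {p..b} = ccut n m2 {p..b}" by (rule H) (use ab pr g pq in \<open>auto simp: NP_def\<close>)
      show "ccut n m1 {p..a-1} = ccut n m2 {p..a-1}" by (rule H) (use ab pr g pq in \<open>auto simp: NP_def\<close>)
    qed
  qed
qed

lemma (in blk) cNP:
  assumes s: "symm m" and ab: "a \<le> b" "b \<le> n" and np: "NP p q a b"
  shows "ccut n (newm n p q m) {a..b} =
    (if p \<le> a \<and> b \<le> q then ccut n m {p+q-b..p+q-a} else ccut n m {a..b})"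
proof (cases "p \<le> a \<and> b \<le> q")
  case True then show ?thesis using cin ab by auto
next
  case False
  then have "b < p \<or> q < a \<or> (a \<le> p \<and> q \<le> b)" using np unfolding NP_def by auto
  then show ?thesis using cout[OF s ab] False by auto
qed

lemma valid_of: "(sg, m) \<in> arc_diagrams n l linf \<Longrightarrow> wfd n m \<and> nc m"
  unfolding arc_diagrams_def wfd_def nc_def symm_def by auto

lemma blk_of: "cactus_gen n (p, q) \<Longrightarrow> blk n p q"
  unfolding cactus_gen_def by unfold_locales auto

lemma wf_symm: "wfd n m \<Longrightarrow> symm m" unfolding wfd_def by simp

lemma rel_invol:
  assumes g: "cactus_gen n (p, q)" and x: "(sg, m) \<in> arc_diagrams n l linf"
  shows "shear n (p, q) (shear n (p, q) (sg, m)) = (sg, m)"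
proof -
  interpret blk n p q by (rule blk_of[OF g])
  have v: "wfd n m" "nc m" using valid_of[OF x] by auto
  let ?m1 = "newm n p q m"
  let ?m2 = "newm n p q ?m1"
  have v1: "wfd n ?m1" "nc ?m1" using valid_newm[OF v] by auto
  have v2: "wfd n ?m2" "nc ?m2" using valid_newm[OF v1] by auto
  have "?m2 = m"
  proof (rule det[OF v2(1) v(1)])
    fix a b :: nat assume ab: "1 \<le> a" "a \<le> b" "b \<le> n"
    show "ccut n ?m2 {a..b} = ccut n m {a..b}"
    proof (rule reduce[where G = "\<lambda>_ _. True", OF v2 v p1 pq qn _ _ ab])
      fix a b :: nat assume ab: "1 \<le> a" "a \<le> b" "b \<le> n" and np: "NP p q a b"
      show "ccut n ?m2 {a..b} = ccut n m {a..b}"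
      proof (cases "p \<le> a \<and> b \<le> q")
        case True
        have np2: "NP p q (p+q-b) (p+q-a)" unfolding NP_def using True ab by auto
        have e: "p + q - (p + q - a) = a" "p + q - (p + q - b) = b" using True ab by auto
        have "ccut n ?m2 {a..b} = ccut n ?m1 {p+q-b..p+q-a}"
          using cNP[OF wf_symm[OF v1(1)] ab(2,3) np] True by simp
        also have "\<dots> = ccut n m {a..b}"
        proof -
          have h1: "p+q-b \<le> p+q-a" "p+q-a \<le> n" "p \<le> p+q-b" "p+q-a \<le> q" using True ab qn by auto
          from cNP[OF wf_symm[OF v(1)] h1(1,2) np2] h1(3,4)
          have "ccut n ?m1 {p+q-b..p+q-a} = ccut n m {p + q - (p + q - a)..p + q - (p + q - b)}" by simp
          then show ?thesis unfolding e .
        qed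
        finally show ?thesis .
      next
        case False
        then show ?thesis
          using cNP[OF wf_symm[OF v1(1)] ab(2,3) np] cNP[OF wf_symm[OF v(1)] ab(2,3) np]
          by (simp add: if_not_P[OF False])
      qed
    qed auto
  qed
  then show ?thesis unfolding shear_eq by simp
qed

lemma rho_comm: "q < p' \<Longrightarrow> refl_pos p' q' (refl_pos p q k) = refl_pos p q (refl_pos p' q' k)"
  unfolding refl_pos_def by auto

lemma rel_comm:
  assumes g1: "cactus_gen n (p, q)" and g2: "cactus_gen n (p', q')" and qp: "q < p'"
    and x: "(sg, m) \<in> arc_diagrams n l linf"
  shows "shear n (p, q) (shear n (p', q') (sg, m)) = shear n (p', q') (shear n (p, q) (sg, m))"
proof -
  interpret B1: blk n p q by (rule blk_of[OF g1])
  interpret B2: blk n p' q' by (rule blk_of[OF g2])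
  have v: "wfd n m" "nc m" using valid_of[OF x] by auto
  let ?a = "newm n p' q' m" and ?b = "newm n p q m"
  let ?A = "newm n p q ?a" and ?B = "newm n p' q' ?b"
  have va: "wfd n ?a" "nc ?a" using B2.valid_newm[OF v] by auto
  have vb: "wfd n ?b" "nc ?b" using B1.valid_newm[OF v] by auto
  have vA: "wfd n ?A" "nc ?A" using B1.valid_newm[OF va] by auto
  have vB: "wfd n ?B" "nc ?B" using B2.valid_newm[OF vb] by auto
  note sm = wf_symm[OF v(1)] and sa = wf_symm[OF va(1)] and sb = wf_symm[OF vb(1)]
  have step1: "ccut n ?A {a..b} = ccut n ?B {a..b}"
    if ab: "1 \<le> a" "a \<le> b" "b \<le> n" and np1: "NP p q a b" for a b
  proof (rule reduce[where G = "NP p q", OF vA vB B2.p1 B2.pq B2.qn _ _ ab np1])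
    fix a b :: nat assume ab: "1 \<le> a" "a \<le> b" "b \<le> n" and np2: "NP p' q' a b" and np1: "NP p q a b"
    show "ccut n ?A {a..b} = ccut n ?B {a..b}"
    proof (cases "p \<le> a \<and> b \<le> q")
      case in1: True
      have h: "p+q-b \<le> p+q-a" "p+q-a \<le> n" "p+q-a < p'" using in1 ab qp B1.qn by auto
      have np2': "NP p' q' (p+q-b) (p+q-a)" using h unfolding NP_def by auto
      have n2: "\<not> (p' \<le> a \<and> b \<le> q')" "\<not> (p' \<le> p+q-b \<and> p+q-a \<le> q')" using in1 h qp ab by auto
      have "ccut n ?A {a..b} = ccut n ?a {p+q-b..p+q-a}"
        using B1.cNP[OF sa ab(2,3) np1] in1 by simp
      also have "\<dots> = ccut n m {p+q-b..p+q-a}"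
        using B2.cNP[OF sm h(1,2) np2'] n2 by simp
      also have "\<dots> = ccut n ?b {a..b}"
        using B1.cNP[OF sm ab(2,3) np1] in1 by simp
      also have "\<dots> = ccut n ?B {a..b}"
        using B2.cNP[OF sb ab(2,3) np2] n2 by simp
      finally show ?thesis .
    next
      case out1: False
      show ?thesis
      proof (cases "p' \<le> a \<and> b \<le> q'")
        case in2: True
        have h: "p'+q'-b \<le> p'+q'-a" "p'+q'-a \<le> n" "q < p'+q'-b" using in2 ab qp B2.qn by auto
        have np1': "NP p q (p'+q'-b) (p'+q'-a)" using h unfolding NP_def by auto
        have n1: "\<not> (p \<le> a \<and> b \<le> q)" "\<not> (p \<le> p'+q'-b \<and> p'+q'-a \<le> q)" using out1 h by auto
        have "ccut n ?A {a..b} = ccut n ?a {a..b}"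
          using B1.cNP[OF sa ab(2,3) np1] n1 by simp
        also have "\<dots> = ccut n m {p'+q'-b..p'+q'-a}"
          using B2.cNP[OF sm ab(2,3) np2] in2 by simp
        also have "\<dots> = ccut n ?b {p'+q'-b..p'+q'-a}"
          using B1.cNP[OF sm h(1,2) np1'] n1 by simp
        also have "\<dots> = ccut n ?B {a..b}"
          using B2.cNP[OF sb ab(2,3) np2] in2 by simp
        finally show ?thesis .
      next
        case out2: False
        have "ccut n ?A {a..b} = ccut n ?a {a..b}"
          using B1.cNP[OF sa ab(2,3) np1] out1 by (simp add: if_not_P[OF out1])
        also have "\<dots> = ccut n m {a..b}"
          using B2.cNP[OF sm ab(2,3) np2] by (simp add: if_not_P[OF out2])
        also have "\<dots> = ccut n ?b {a..b}"
          using B1.cNP[OF sm ab(2,3) np1] by (simp add: if_not_P[OF out1])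
        also have "\<dots> = ccut n ?B {a..b}"
          using B2.cNP[OF sb ab(2,3) np2] by (simp add: if_not_P[OF out2])
        finally show ?thesis .
      qed
    qed
  next
    fix a b :: nat assume "1 \<le> a" "a \<le> b" "b \<le> n" "NP p q a b" "\<not> NP p' q' a b"
    then show "(a < p' \<longrightarrow> NP p q a (p'-1) \<and> NP p q p' b \<and> NP p q p' q' \<and> NP p q a q' \<and> NP p q (b+1) q') \<and>
       (p' < a \<longrightarrow> NP p q (q'+1) b \<and> NP p q a q' \<and> NP p q p' q' \<and> NP p q p' b \<and> NP p q p' (a-1))"
      using qp B1.pq B2.pq unfolding NP_def by auto
  qed
  have "?A = ?B"
  proof (rule det[OF vA(1) vB(1)])
    fix a b :: nat assume ab: "1 \<le> a" "a \<le> b" "b \<le> n"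
    show "ccut n ?A {a..b} = ccut n ?B {a..b}"
      by (rule reduce[where G = "\<lambda>_ _. True", OF vA vB B1.p1 B1.pq B1.qn _ _ ab]) (use step1 in auto)
  qed
  moreover have "(\<lambda>k. sg (refl_pos p' q' (refl_pos p q k))) = (\<lambda>k. sg (refl_pos p q (refl_pos p' q' k)))"
    using rho_comm[OF qp] by simp
  ultimately show ?thesis unfolding shear_eq by simp
qed

lemma rho_nest: "p \<le> p' \<Longrightarrow> p' < q' \<Longrightarrow> q' \<le> q \<Longrightarrow>
   refl_pos p q (refl_pos p' q' (refl_pos p q k)) = refl_pos (p + q - q') (p + q - p') k"
  unfolding refl_pos_def by auto

lemma rel_nest:
  assumes g1: "cactus_gen n (p, q)" and pp: "p \<le> p'" "p' < q'" "q' \<le> q"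
    and x: "(sg, m) \<in> arc_diagrams n l linf"
  shows "shear n (p, q) (shear n (p', q') (shear n (p, q) (sg, m))) = shear n (p + q - q', p + q - p') (sg, m)"
proof -
  define p3 where "p3 = p + q - q'"
  define q3 where "q3 = p + q - p'"
  have f3: "p \<le> p3" "p3 < q3" "q3 \<le> q" "p3 + q' = p + q" "q3 + p' = p + q"
    unfolding p3_def q3_def using pp by auto
  have g2: "cactus_gen n (p', q')" and g3: "cactus_gen n (p3, q3)"
    using g1 pp f3 unfolding cactus_gen_def by auto
  interpret B1: blk n p q by (rule blk_of[OF g1])
  interpret B2: blk n p' q' by (rule blk_of[OF g2])
  interpret B3: blk n p3 q3 by (rule blk_of[OF g3])
  have v: "wfd n m" "nc m" using valid_of[OF x] by auto
  let ?a = "newm n p q m"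
  let ?b = "newm n p' q' ?a"
  let ?A = "newm n p q ?b" and ?B = "newm n p3 q3 m"
  have va: "wfd n ?a" "nc ?a" using B1.valid_newm[OF v] by auto
  have vb: "wfd n ?b" "nc ?b" using B2.valid_newm[OF va] by auto
  have vA: "wfd n ?A" "nc ?A" using B1.valid_newm[OF vb] by auto
  have vB: "wfd n ?B" "nc ?B" using B3.valid_newm[OF v] by auto
  note sm = wf_symm[OF v(1)] and sa = wf_symm[OF va(1)] and sb = wf_symm[OF vb(1)]
  have step1: "ccut n ?A {a..b} = ccut n ?B {a..b}"
    if ab: "1 \<le> a" "a \<le> b" "b \<le> n" and np1: "NP p q a b" for a b
  proof (rule reduce[where G = "NP p q", OF vA vB B3.p1 B3.pq B3.qn _ _ ab np1])
    fix a b :: nat assume ab: "1 \<le> a" "a \<le> b" "b \<le> n" and np3: "NP p3 q3 a b" and np1: "NP p q a b"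
    show "ccut n ?A {a..b} = ccut n ?B {a..b}"
    proof (cases "p \<le> a \<and> b \<le> q")
      case in1: True
      have h: "p+q-b \<le> p+q-a" "p+q-a \<le> n" "p \<le> p+q-b" "p+q-a \<le> q" using in1 ab B1.qn by auto
      have np1': "NP p q (p+q-b) (p+q-a)" using h unfolding NP_def by auto
      have np2': "NP p' q' (p+q-b) (p+q-a)" using np3 in1 f3 ab unfolding NP_def by auto
      have A1: "ccut n ?A {a..b} = ccut n ?b {p+q-b..p+q-a}"
        using B1.cNP[OF sb ab(2,3) np1] in1 by simp
      show ?thesis
      proof (cases "p' \<le> p+q-b \<and> p+q-a \<le> q'")
        case in2: True
        have in3: "p3 \<le> a \<and> b \<le> q3" using in2 in1 f3 by auto
        have h2: "p'+q'-(p+q-a) \<le> p'+q'-(p+q-b)" "p'+q'-(p+q-b) \<le> n"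
          "p \<le> p'+q'-(p+q-a)" "p'+q'-(p+q-b) \<le> q" using in2 in1 h pp B1.qn by auto
        have np1'': "NP p q (p'+q'-(p+q-a)) (p'+q'-(p+q-b))" using h2 unfolding NP_def by auto
        have e1: "p+q-(p'+q'-(p+q-b)) = p3+q3-b"
          using in2 in1 f3 pp ab by linarith
        have e2: "p+q-(p'+q'-(p+q-a)) = p3+q3-a"
          using in2 in1 f3 pp ab by linarith
        note e = e1 e2
        have "ccut n ?b {p+q-b..p+q-a} = ccut n ?a {p'+q'-(p+q-a)..p'+q'-(p+q-b)}"
          using B2.cNP[OF sa h(1,2) np2'] in2 by simp
        also have "\<dots> = ccut n m {p+q-(p'+q'-(p+q-b))..p+q-(p'+q'-(p+q-a))}"
          using B1.cNP[OF sm h2(1,2) np1''] h2(3,4) by simp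
        also have "\<dots> = ccut n m {p3+q3-b..p3+q3-a}" unfolding e ..
        also have "\<dots> = ccut n ?B {a..b}"
          using B3.cNP[OF sm ab(2,3) np3] in3 by simp
        finally show ?thesis using A1 by simp
      next
        case out2: False
        have out3: "\<not> (p3 \<le> a \<and> b \<le> q3)" using out2 in1 f3 by auto
        have e: "p+q-(p+q-a) = a" "p+q-(p+q-b) = b" using in1 ab by auto
        have "ccut n ?b {p+q-b..p+q-a} = ccut n ?a {p+q-b..p+q-a}"
          using B2.cNP[OF sa h(1,2) np2'] by (simp add: if_not_P[OF out2])
        also have "\<dots> = ccut n m {p+q-(p+q-a)..p+q-(p+q-b)}"
          using B1.cNP[OF sm h(1,2) np1'] h(3,4) by simp
        also have "\<dots> = ccut n m {a..b}" unfolding e ..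
        also have "\<dots> = ccut n ?B {a..b}"
          using B3.cNP[OF sm ab(2,3) np3] by (simp add: if_not_P[OF out3])
        finally show ?thesis using A1 by simp
      qed
    next
      case out1: False
      have out2: "\<not> (p' \<le> a \<and> b \<le> q')" using out1 pp by auto
      have out3: "\<not> (p3 \<le> a \<and> b \<le> q3)" using out1 f3 by auto
      have np2: "NP p' q' a b" using np1 out1 pp ab unfolding NP_def by auto
      have "ccut n ?A {a..b} = ccut n ?b {a..b}"
        using B1.cNP[OF sb ab(2,3) np1] by (simp add: if_not_P[OF out1])
      also have "\<dots> = ccut n ?a {a..b}"
        using B2.cNP[OF sa ab(2,3) np2] by (simp add: if_not_P[OF out2])
      also have "\<dots> = ccut n m {a..b}"
        using B1.cNP[OF sm ab(2,3) np1] by (simp add: if_not_P[OF out1])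
      also have "\<dots> = ccut n ?B {a..b}"
        using B3.cNP[OF sm ab(2,3) np3] by (simp add: if_not_P[OF out3])
      finally show ?thesis .
    qed
  next
    fix a b :: nat assume ab: "1 \<le> a" "a \<le> b" "b \<le> n" and np1: "NP p q a b" and nn: "\<not> NP p3 q3 a b"
    have ins: "p \<le> a" "b \<le> q" using np1 nn f3 ab unfolding NP_def by auto
    show "(a < p3 \<longrightarrow> NP p q a (p3-1) \<and> NP p q p3 b \<and> NP p q p3 q3 \<and> NP p q a q3 \<and> NP p q (b+1) q3) \<and>
       (p3 < a \<longrightarrow> NP p q (q3+1) b \<and> NP p q a q3 \<and> NP p q p3 q3 \<and> NP p q p3 b \<and> NP p q p3 (a-1))"
      using ins f3 nn unfolding NP_def by auto
  qed
  have "?A = ?B"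
  proof (rule det[OF vA(1) vB(1)])
    fix a b :: nat assume ab: "1 \<le> a" "a \<le> b" "b \<le> n"
    show "ccut n ?A {a..b} = ccut n ?B {a..b}"
      by (rule reduce[where G = "\<lambda>_ _. True", OF vA vB B1.p1 B1.pq B1.qn _ _ ab]) (use step1 in auto)
  qed
  moreover have "(\<lambda>k. sg (refl_pos p q (refl_pos p' q' (refl_pos p q k)))) = (\<lambda>k. sg (refl_pos p3 q3 k))"
    using rho_nest[OF pp] unfolding p3_def q3_def by simp
  ultimately show ?thesis unfolding shear_eq p3_def q3_def by simp
qed

lemma act_word_append: "act_word n (u @ v) x = act_word n u (act_word n v x)"
  by (induction u) auto

lemma shear_closed: "cactus_gen n g \<Longrightarrow> x \<in> arc_diagrams n l linf \<Longrightarrow> shear n g x \<in> arc_diagrams n l linf"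
proof -
  assume g: "cactus_gen n g" and x: "x \<in> arc_diagrams n l linf"
  obtain p q where gpq: "g = (p, q)" by (cases g)
  obtain sg m where sm: "x = (sg, m)" by (cases x)
  interpret blk n p q by (rule blk_of) (use g gpq in simp)
  show ?thesis using closure[of sg m l linf] x gpq sm by simp
qed

lemma act_closed: "list_all (cactus_gen n) w \<Longrightarrow> x \<in> arc_diagrams n l linf \<Longrightarrow> act_word n w x \<in> arc_diagrams n l linf"
  by (induction w) (auto intro: shear_closed)

lemma rel_act:
  assumes r: "cactus_rel n u v" and y: "y \<in> arc_diagrams n l linf"
  shows "act_word n u y = act_word n v y"
proof -
  obtain sg m where sm: "y = (sg, m)" by (cases y)
  from r show ?thesis
  proof cases
    case (invol p q)
    then show ?thesis using rel_invol[of n p q sg m l linf] y sm by simp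
  next
    case (comm p q p' q')
    from comm(5) show ?thesis
    proof
      assume "q < p'"
      then show ?thesis using rel_comm[of n p q p' q' sg m l linf] comm y sm by simp
    next
      assume "q' < p"
      then show ?thesis using rel_comm[of n p' q' p q sg m l linf] comm y sm by simp
    qed
  next
    case (nest p q p' q')
    then show ?thesis using rel_nest[of n p q p' q' sg m l linf] y sm by simp
  qed
qed

lemma eq_act:
  assumes "cactus_eq n w w'"
  shows "\<forall>x. x \<in> arc_diagrams n l linf \<longrightarrow> act_word n w x = act_word n w' x"
  using assms
proof induction
  case (refl w) then show ?case by simp
next
  case (rel u v a b)
  show ?case
  proof (intro allI impI)
    fix x assume x: "x \<in> arc_diagrams n l linf"
    have "act_word n b x \<in> arc_diagrams n l linf" by (rule act_closed[OF rel(3) x])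
    then have "act_word n u (act_word n b x) = act_word n v (act_word n b x)" by (rule rel_act[OF rel(1)])
    then show "act_word n (a @ u @ b) x = act_word n (a @ v @ b) x" by (simp add: act_word_append)
  qed
next
  case (sym u v) then show ?case by simp
next
  case (trans u v w) then show ?case by simp
qed

theorem mainTheorem1:
  fixes n :: nat and l :: "nat \<Rightarrow> nat" and linf :: nat
  assumes "n \<ge> 2"
  shows "(\<forall>g x. cactus_gen n g \<longrightarrow> x \<in> arc_diagrams n l linf \<longrightarrow>
            shear n g x \<in> arc_diagrams n l linf)
       \<and> (\<forall>w w' x. cactus_eq n w w' \<longrightarrow> x \<in> arc_diagrams n l linf \<longrightarrow>
            act_word n w x = act_word n w' x)
       \<and> (\<forall>p q x. cactus_gen n (p, q) \<longrightarrow> x \<in> arc_diagrams n l linf \<longrightarrow>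
            shear n (p, q) (shear n (p, q) x) = x)
       \<and> (\<forall>p q p' q' x. cactus_gen n (p, q) \<longrightarrow> cactus_gen n (p', q') \<longrightarrow>
            (q < p' \<or> q' < p) \<longrightarrow> x \<in> arc_diagrams n l linf \<longrightarrow>
            shear n (p, q) (shear n (p', q') x) = shear n (p', q') (shear n (p, q) x))
       \<and> (\<forall>p q p' q' x. cactus_gen n (p, q) \<longrightarrow> p \<le> p' \<longrightarrow> p' < q' \<longrightarrow> q' \<le> q \<longrightarrow>
            x \<in> arc_diagrams n l linf \<longrightarrow>
            shear n (p, q) (shear n (p', q') (shear n (p, q) x)) =
            shear n (p + q - q', p + q - p') x)"
proof (intro conjI allI impI)
  fix g x assume "cactus_gen n g" "x \<in> arc_diagrams n l linf"
  then show "shear n g x \<in> arc_diagrams n l linf" by (rule shear_closed)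
next
  fix w w' x assume "cactus_eq n w w'" "x \<in> arc_diagrams n l linf"
  then show "act_word n w x = act_word n w' x" using eq_act by blast
next
  fix p q x assume "cactus_gen n (p, q)" "x \<in> arc_diagrams n l linf"
  then show "shear n (p, q) (shear n (p, q) x) = x" using rel_invol by (cases x) blast
next
  fix p q p' q' x assume g: "cactus_gen n (p, q)" "cactus_gen n (p', q')" and d: "q < p' \<or> q' < p"
    and x: "x \<in> arc_diagrams n l linf"
  obtain sg m where sm: "x = (sg, m)" by (cases x)
  from d show "shear n (p, q) (shear n (p', q') x) = shear n (p', q') (shear n (p, q) x)"
  proof
    assume "q < p'" then show ?thesis using rel_comm[of n p q p' q' sg m l linf] g x sm by simp
  next
    assume "q' < p" then show ?thesis using rel_comm[of n p' q' p q sg m l linf] g x sm by simp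
  qed
next
  fix p q p' q' x assume "cactus_gen n (p, q)" "p \<le> p'" "p' < q'" "q' \<le> q" "x \<in> arc_diagrams n l linf"
  then show "shear n (p, q) (shear n (p', q') (shear n (p, q) x)) = shear n (p + q - q', p + q - p') x"
    using rel_nest by (cases x) blast
qed


end
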